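(* Let $N$ be a lattice, let $\sigma\subset N_{\mathbb R}=N\otimes_{\mathbb Z}\mathbb R$ be a strongly convex rational polyhedral cone, let $\Delta$ be a rational simplicial subdivision of $\sigma$, and let $v_1,\ldots,v_s$ be the primitive generators of the rays of $\Delta$. Then, in the quotient field of $\mathbb Z[N]$, \[ (1-x^{v_1})\cdots(1-x^{v_s})\cdot G_\sigma \;=\; H_\Delta+\sum_{\tau\in\Delta^{\mathrm{sing}}}\Bigl(B_\tau\cdot H_{\operatorname{lk}\tau}\cdot\prod_{v_i\notin\operatorname{Star}\tau}(1-x^{v_i})\Bigr). \]
   Context: $\mathbb Z[N]$ is the Laurent polynomial (group) ring of $N$, with monomials $x^v$ for $v\in N$. $G_\sigma=\sum_{v\in\sigma\cap N}x^v$ is the generating function of lattice points of $\sigma$ (a rational function). For a cone $\tau$ we write $v_i\in\tau$ to mean that $v_i$ generates a ray of $\tau$. Define $H_\Delta=\sum_{\tau\in\Delta}\bigl(\prod_{v_i\in\tau}x^{v_i}\cdot\prod_{v_j\notin\tau}(1-x^{v_j})\bigr)$, the sum over all cones of $\Delta$ (including the zero cone). A cone is unimodular if it is spanned by part of a basis of $N$; $\Delta^{\mathrm{sing}}$ is the set of cones of $\Delta$ that are not unimodular. For $\tau\in\Delta$ spanned by $v_1,\ldots,v_r$ (after renumbering), $\operatorname{Box}(\tau)=\{a_1v_1+\cdots+a_rv_r : 0<a_i<1\}$ and $B_\tau=\sum_{v\in\operatorname{Box}(\tau)\cap N}x^v$. The link $\operatorname{lk}\tau$ is the set of cones $\gamma\in\Delta$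 with $\gamma\cap\tau=0$ and $\gamma+\tau\in\Delta$; $v_j\in\operatorname{lk}\tau$ means $v_j$ generates a ray of some cone of $\operatorname{lk}\tau$, and $H_{\operatorname{lk}\tau}=\sum_{\gamma\in\operatorname{lk}\tau}\bigl(\prod_{v_i\in\gamma}x^{v_i}\cdot\prod_{v_j\in\operatorname{lk}\tau,\,v_j\notin\gamma}(1-x^{v_j})\bigr)$. $\operatorname{Star}\tau$ is the union of the maximal cones of $\Delta$ containing $\tau$, and $v_i\notin\operatorname{Star}\tau$ means $v_i$ does not generate a ray of any such cone. *)

theory Defs
  imports "HOL-Analysis.Analysis" "HOL-Library.Poly_Mapping"
begin

text \<open>The lattice N is modelled as int^'n (any lattice is isomorphic to some Z^n);
  N_R = real^'n, with the embedding emb.  Laurent polynomials Z[N] are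
  finitely supported maps (int^'n) \<Rightarrow>0 int with convolution product;
  formal series (like G_sigma) are arbitrary maps int^'n \<Rightarrow> int.\<close>

type_synonym 'n lpoly = "(int ^ 'n) \<Rightarrow>\<^sub>0 int"

definition emb :: "int ^ 'n \<Rightarrow> real ^ 'n" where
  "emb u = (\<chi> i. real_of_int (u $ i))"

definition xmon :: "int ^ 'n \<Rightarrow> 'n lpoly" where
  "xmon v = Poly_Mapping.single v 1"

definition cone_gen :: "(real ^ 'n) set \<Rightarrow> (real ^ 'n) set" where
  "cone_gen S = {x. \<exists>c. (\<forall>v\<in>S. 0 \<le> c v) \<and> x = (\<Sum>v\<in>S. c v *\<^sub>R v)}"

definition rational_polyhedral_cone :: "(real ^ 'n) set \<Rightarrow> bool" where
  "rational_polyhedral_cone \<sigma> \<longleftrightarrow>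
     (\<exists>S. finite S \<and> S \<subseteq> range emb \<and> \<sigma> = cone_gen S)"

definition strongly_convex :: "(real ^ 'n) set \<Rightarrow> bool" where
  "strongly_convex \<sigma> \<longleftrightarrow> \<sigma> \<inter> uminus ` \<sigma> = {0}"

definition rational_simplicial_cone :: "(real ^ 'n) set \<Rightarrow> bool" where
  "rational_simplicial_cone \<tau> \<longleftrightarrow>
     (\<exists>S. finite S \<and> S \<subseteq> range emb \<and> independent S \<and> \<tau> = cone_gen S)"

definition is_fan :: "(real ^ 'n) set set \<Rightarrow> bool" where
  "is_fan \<Delta> \<longleftrightarrow> finite \<Delta> \<and> {} \<notin> \<Delta> \<and>
     (\<forall>\<tau>\<in>\<Delta>. \<forall>F. F face_of \<tau> \<and> F \<noteq> {} \<longrightarrow> F \<in> \<Delta>) \<and>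
     (\<forall>\<tau>\<in>\<Delta>. \<forall>\<tau>'\<in>\<Delta>. (\<tau> \<inter> \<tau>') face_of \<tau> \<and> (\<tau> \<inter> \<tau>') face_of \<tau>')"

definition rational_simplicial_subdivision ::
    "(real ^ 'n) set set \<Rightarrow> (real ^ 'n) set \<Rightarrow> bool" where
  "rational_simplicial_subdivision \<Delta> \<sigma> \<longleftrightarrow>
     is_fan \<Delta> \<and> (\<forall>\<tau>\<in>\<Delta>. rational_simplicial_cone \<tau>) \<and> \<Union>\<Delta> = \<sigma>"

definition primitive :: "int ^ 'n \<Rightarrow> bool" where
  "primitive v \<longleftrightarrow> v \<noteq> 0 \<and> (\<forall>w (k::int). v = k *s w \<longrightarrow> k = 1 \<or> k = -1)"

definition ray_gens :: "(real ^ 'n) set set \<Rightarrow> (int ^ 'n) set" where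
  "ray_gens \<Delta> = {v. primitive v \<and> cone_gen {emb v} \<in> \<Delta>}"

definition gens :: "(real ^ 'n) set set \<Rightarrow> (real ^ 'n) set \<Rightarrow> (int ^ 'n) set" where
  "gens \<Delta> \<tau> = {v \<in> ray_gens \<Delta>. cone_gen {emb v} face_of \<tau>}"

definition H :: "(real ^ 'n) set set \<Rightarrow> 'n lpoly" where
  "H \<Delta> = (\<Sum>\<tau>\<in>\<Delta>. (\<Prod>v\<in>gens \<Delta> \<tau>. xmon v) *
                    (\<Prod>v\<in>ray_gens \<Delta> - gens \<Delta> \<tau>. 1 - xmon v))"

definition zbasis :: "(int ^ 'n) set \<Rightarrow> bool" where
  "zbasis B \<longleftrightarrow> finite B \<and>
     (\<forall>w. \<exists>c. w = (\<Sum>b\<in>B. c b *s b)) \<and>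
     (\<forall>c. (\<Sum>b\<in>B. c b *s b) = 0 \<longrightarrow> (\<forall>b\<in>B. c b = 0))"

definition unimodular :: "(real ^ 'n) set \<Rightarrow> bool" where
  "unimodular \<tau> \<longleftrightarrow> (\<exists>S B. S \<subseteq> B \<and> zbasis B \<and> \<tau> = cone_gen (emb ` S))"

definition sing :: "(real ^ 'n) set set \<Rightarrow> (real ^ 'n) set set" where
  "sing \<Delta> = {\<tau>\<in>\<Delta>. \<not> unimodular \<tau>}"

definition box_pts :: "(real ^ 'n) set set \<Rightarrow> (real ^ 'n) set \<Rightarrow> (int ^ 'n) set" where
  "box_pts \<Delta> \<tau> = {u. \<exists>a. (\<forall>v\<in>gens \<Delta> \<tau>. 0 < a v \<and> a v < 1) \<and>
                          emb u = (\<Sum>v\<in>gens \<Delta> \<tau>. a v *\<^sub>R emb v)}"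

definition B :: "(real ^ 'n) set set \<Rightarrow> (real ^ 'n) set \<Rightarrow> 'n lpoly" where
  "B \<Delta> \<tau> = (\<Sum>u\<in>box_pts \<Delta> \<tau>. xmon u)"

definition lk :: "(real ^ 'n) set set \<Rightarrow> (real ^ 'n) set \<Rightarrow> (real ^ 'n) set set" where
  "lk \<Delta> \<tau> = {\<gamma>\<in>\<Delta>. \<gamma> \<inter> \<tau> = {0} \<and> {a + b | a b. a \<in> \<gamma> \<and> b \<in> \<tau>} \<in> \<Delta>}"

definition lk_gens :: "(real ^ 'n) set set \<Rightarrow> (real ^ 'n) set \<Rightarrow> (int ^ 'n) set" where
  "lk_gens \<Delta> \<tau> = {v. \<exists>\<gamma>\<in>lk \<Delta> \<tau>. v \<in> gens \<Delta> \<gamma>}"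

definition H_lk :: "(real ^ 'n) set set \<Rightarrow> (real ^ 'n) set \<Rightarrow> 'n lpoly" where
  "H_lk \<Delta> \<tau> = (\<Sum>\<gamma>\<in>lk \<Delta> \<tau>. (\<Prod>v\<in>gens \<Delta> \<gamma>. xmon v) *
                    (\<Prod>v\<in>lk_gens \<Delta> \<tau> - gens \<Delta> \<gamma>. 1 - xmon v))"

definition maximal_cone :: "(real ^ 'n) set set \<Rightarrow> (real ^ 'n) set \<Rightarrow> bool" where
  "maximal_cone \<Delta> \<delta> \<longleftrightarrow> \<delta> \<in> \<Delta> \<and> \<not> (\<exists>\<delta>'\<in>\<Delta>. \<delta> \<subset> \<delta>')"

text \<open>the v_i generating a ray of some maximal cone containing \<tau> (i.e. v_i \<in> Star \<tau>)\<close>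
definition star_gens :: "(real ^ 'n) set set \<Rightarrow> (real ^ 'n) set \<Rightarrow> (int ^ 'n) set" where
  "star_gens \<Delta> \<tau> = {v. \<exists>\<delta>. maximal_cone \<Delta> \<delta> \<and> \<tau> \<subseteq> \<delta> \<and> v \<in> gens \<Delta> \<delta>}"

definition G :: "(real ^ 'n) set \<Rightarrow> int ^ 'n \<Rightarrow> int" where
  "G \<sigma> u = (if emb u \<in> \<sigma> then 1 else 0)"

definition mul_series :: "'n lpoly \<Rightarrow> (int ^ 'n \<Rightarrow> int) \<Rightarrow> (int ^ 'n \<Rightarrow> int)" where
  "mul_series p g = (\<lambda>w. \<Sum>u\<in>Poly_Mapping.keys p. Poly_Mapping.lookup p u * g (w - u))"

end

theory Submission
  imports Defs
begin

lemma lookup_mult_keys: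
  fixes p q :: "('n::finite) lpoly"
  shows "Poly_Mapping.lookup (p * q) w =
    (\<Sum>a\<in>Poly_Mapping.keys p. Poly_Mapping.lookup p a * Poly_Mapping.lookup q (w - a))"
proof -
  have inner: "(\<Sum>b. Poly_Mapping.lookup q b when w = l + b) = Poly_Mapping.lookup q (w - l)" for l
  proof -
    have eq: "(\<lambda>b. Poly_Mapping.lookup q b when w = l + b) = (\<lambda>b. Poly_Mapping.lookup q b when b = w - l)"
      by (auto simp: fun_eq_iff when_def algebra_simps)
    have "(\<Sum>b. Poly_Mapping.lookup q b when w = l + b) = (\<Sum>b. Poly_Mapping.lookup q b when b = w - l)"
      by (simp only: eq)
    also have "\<dots> = Poly_Mapping.lookup q (w - l)" by (rule Sum_any_when_equal)
    finally show ?thesis .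
  qed
  have "Poly_Mapping.lookup (p * q) w = (\<Sum>l. Poly_Mapping.lookup p l * Poly_Mapping.lookup q (w - l))"
    by (simp add: lookup_mult inner)
  also have "\<dots> = (\<Sum>a\<in>Poly_Mapping.keys p. Poly_Mapping.lookup p a * Poly_Mapping.lookup q (w - a))"
    by (rule Sum_any.expand_superset) (auto simp: in_keys_iff)
  finally show ?thesis .
qed

lemma ms_superset:
  assumes "finite K" "Poly_Mapping.keys p \<subseteq> K"
  shows "mul_series p g w = (\<Sum>u\<in>K. Poly_Mapping.lookup p u * g (w - u))"
  unfolding mul_series_def
  by (rule sum.mono_neutral_left) (use assms in \<open>auto simp: in_keys_iff\<close>)

lemma ms_add: "mul_series (p + q) g w = mul_series p g w + mul_series q g w"
proof -
  let ?K = "Poly_Mapping.keys p \<union> Poly_Mapping.keys q"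
  have "mul_series (p + q) g w = (\<Sum>u\<in>?K. Poly_Mapping.lookup (p+q) u * g (w - u))"
    by (rule ms_superset) (auto simp: keys_add)
  also have "\<dots> = (\<Sum>u\<in>?K. Poly_Mapping.lookup p u * g (w - u)) + (\<Sum>u\<in>?K. Poly_Mapping.lookup q u * g (w - u))"
    by (simp add: lookup_add sum.distrib algebra_simps)
  also have "\<dots> = mul_series p g w + mul_series q g w"
    by (simp add: ms_superset[symmetric])
  finally show ?thesis .
qed

lemma ms_uminus: "mul_series (- p) g w = - mul_series p g w"
  unfolding mul_series_def by (simp add: sum_negf)

lemma ms_diff: "mul_series (p - q) g w = mul_series p g w - mul_series q g w"
  using ms_add[of p "-q" g w] ms_uminus[of q g w] by simp

lemma ms_zero: "mul_series 0 g w = 0"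
  unfolding mul_series_def by simp

lemma ms_sum: "finite I \<Longrightarrow> mul_series (\<Sum>i\<in>I. p i) g w = (\<Sum>i\<in>I. mul_series (p i) g w)"
  by (induction I rule: finite_induct) (auto simp: ms_add ms_zero)

lemma ms_single: "mul_series (Poly_Mapping.single a c) g w = c * g (w - a)"
  by (subst ms_superset[of "{a}"]) auto

lemma ms_xmon: "mul_series (xmon a) g w = g (w - a)"
  by (simp add: xmon_def ms_single)

lemma ms_one: "mul_series 1 g = g"
  using ms_single[of 0 1 g] by (auto simp: fun_eq_iff)

lemma ms_gsum: "finite I \<Longrightarrow> mul_series p (\<lambda>w. \<Sum>i\<in>I. f i w) w = (\<Sum>i\<in>I. mul_series p (f i) w)"
  unfolding mul_series_def by (simp add: sum_distrib_left sum.swap[of _ I])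

lemma ms_shift: "mul_series p (\<lambda>y. g (y - c)) w = mul_series p g (w - c)"
  unfolding mul_series_def by (simp add: algebra_simps)

lemma ms_delta: "mul_series p (Poly_Mapping.lookup 1) = Poly_Mapping.lookup p"
proof
  fix w
  have "mul_series p (Poly_Mapping.lookup 1) w = (\<Sum>u\<in>insert w (Poly_Mapping.keys p). Poly_Mapping.lookup p u * Poly_Mapping.lookup 1 (w - u))"
    by (rule ms_superset) auto
  also have "\<dots> = (\<Sum>u\<in>insert w (Poly_Mapping.keys p). if u = w then Poly_Mapping.lookup p u else 0)"
    by (rule sum.cong) (auto simp: lookup_one when_def)
  also have "\<dots> = Poly_Mapping.lookup p w" by simp
  finally show "mul_series p (Poly_Mapping.lookup 1) w = Poly_Mapping.lookup p w" .
qed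

lemma ms_mult: "mul_series (p * q) g = mul_series p (mul_series q g)"
proof
  fix w
  define K where "K = (\<lambda>(a,b). a + b) ` (Poly_Mapping.keys p \<times> Poly_Mapping.keys q)"
  have fK: "finite K" unfolding K_def by auto
  have kK: "Poly_Mapping.keys (p * q) \<subseteq> K"
    using keys_mult[of p q] unfolding K_def by auto
  have "mul_series (p * q) g w = (\<Sum>u\<in>K. Poly_Mapping.lookup (p*q) u * g (w - u))"
    by (rule ms_superset[OF fK kK])
  also have "\<dots> = (\<Sum>u\<in>K. \<Sum>a\<in>Poly_Mapping.keys p. Poly_Mapping.lookup p a * (Poly_Mapping.lookup q (u - a) * g (w - u)))"
    by (simp only: lookup_mult_keys sum_distrib_right mult.assoc)
  also have "\<dots> = (\<Sum>a\<in>Poly_Mapping.keys p. Poly_Mapping.lookup p a * (\<Sum>u\<in>K. Poly_Mapping.lookup q (u - a) * g (w - u)))"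
    by (simp add: sum.swap[of _ K] sum_distrib_left)
  also have "\<dots> = (\<Sum>a\<in>Poly_Mapping.keys p. Poly_Mapping.lookup p a * mul_series q g (w - a))"
  proof (rule sum.cong[OF refl])
    fix a assume a: "a \<in> Poly_Mapping.keys p"
    have inj: "inj_on (\<lambda>u. u - a) K" by (auto simp: inj_on_def)
    have "(\<Sum>u\<in>K. Poly_Mapping.lookup q (u - a) * g (w - u)) = (\<Sum>b\<in>(\<lambda>u. u - a) ` K. Poly_Mapping.lookup q b * g (w - a - b))"
      by (subst sum.reindex[OF inj]) (auto simp: algebra_simps)
    also have "\<dots> = mul_series q g (w - a)"
    proof (rule ms_superset[symmetric])
      show "finite ((\<lambda>u. u - a) ` K)" using fK by auto
      show "Poly_Mapping.keys q \<subseteq> (\<lambda>u. u - a) ` K"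
      proof
        fix b assume "b \<in> Poly_Mapping.keys q"
        then have "a + b \<in> K" using a unfolding K_def by auto
        then show "b \<in> (\<lambda>u. u - a) ` K" by (force intro: image_eqI[of _ _ "a+b"])
      qed
    qed
    finally show "Poly_Mapping.lookup p a * (\<Sum>u\<in>K. Poly_Mapping.lookup q (u - a) * g (w - u)) =
         Poly_Mapping.lookup p a * mul_series q g (w - a)" by simp
  qed
  also have "\<dots> = mul_series p (mul_series q g) w" by (simp add: mul_series_def)
  finally show "mul_series (p * q) g w = mul_series p (mul_series q g) w" .
qed

lemma lookup_xmon_mult: "Poly_Mapping.lookup (xmon c * q) w = Poly_Mapping.lookup q (w - c)"
  by (simp add: lookup_mult_keys xmon_def)

lemma xmon_add: "xmon (a + b) = xmon a * xmon b"
  by (simp add: xmon_def mult_single)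

lemma xmon0: "xmon 0 = 1" by (simp add: xmon_def)

lemma xmon_sum: "finite T \<Longrightarrow> xmon (\<Sum>v\<in>T. f v) = (\<Prod>v\<in>T. xmon (f v))"
  by (induction T rule: finite_induct) (auto simp: xmon_add xmon0)

lemma emb_comp: "emb u $ i = real_of_int (u $ i)"
  by (simp add: emb_def)

lemma emb_add: "emb (u + v) = emb u + emb v"
  by (simp add: emb_def vec_eq_iff)

lemma emb_diff: "emb (u - v) = emb u - emb v"
  by (simp add: emb_def vec_eq_iff)

lemma emb_uminus: "emb (- u) = - emb u"
  by (simp add: emb_def vec_eq_iff)

lemma emb_zero[simp]: "emb 0 = 0"
  by (simp add: emb_def vec_eq_iff)

lemma emb_smult: "emb (k *s v) = real_of_int k *\<^sub>R emb v"
  by (simp add: emb_def vec_eq_iff)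

lemma emb_sum: "emb (\<Sum>v\<in>T. f v) = (\<Sum>v\<in>T. emb (f v))"
  by (induction T rule: infinite_finite_induct) (auto simp: emb_add)

lemma emb_inj: "emb u = emb v \<longleftrightarrow> u = v"
  by (auto simp: emb_def vec_eq_iff)

lemma emb_eq0: "emb u = 0 \<longleftrightarrow> u = 0"
  using emb_inj[of u 0] by simp

lemma inj_emb: "inj_on emb A"
  by (auto simp: inj_on_def emb_inj)

definition li :: "(int ^ 'n::finite) set \<Rightarrow> bool" where
  "li P \<longleftrightarrow> finite P \<and> (\<forall>c. (\<Sum>v\<in>P. c v *\<^sub>R emb v) = 0 \<longrightarrow> (\<forall>v\<in>P. c v = 0))"

definition cg :: "(int ^ 'n::finite) set \<Rightarrow> (real ^ 'n) set" where
  "cg P = {x. \<exists>c. (\<forall>v\<in>P. 0 \<le> c v) \<and> x = (\<Sum>v\<in>P. c v *\<^sub>R emb v)}"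

lemma cone_gen_emb: "cone_gen (emb ` P) = cg P"
proof -
  have inj: "inj_on emb P" by (rule inj_emb)
  show ?thesis
  proof (intro set_eqI iffI)
    fix x assume "x \<in> cone_gen (emb ` P)"
    then obtain c where c: "\<forall>v\<in>emb ` P. 0 \<le> c v" "x = (\<Sum>v\<in>emb ` P. c v *\<^sub>R v)"
      unfolding cone_gen_def by blast
    then have "x = (\<Sum>v\<in>P. c (emb v) *\<^sub>R emb v)" by (simp add: sum.reindex[OF inj])
    then show "x \<in> cg P" unfolding cg_def using c(1) by auto
  next
    fix x assume "x \<in> cg P"
    then obtain c where c: "\<forall>v\<in>P. 0 \<le> c v" "x = (\<Sum>v\<in>P. c v *\<^sub>R emb v)"
      unfolding cg_def by blast
    define d where "d = (\<lambda>y. c (inv_into P emb y))"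
    have "x = (\<Sum>v\<in>emb ` P. d v *\<^sub>R v)"
      unfolding c(2) d_def by (simp add: sum.reindex[OF inj] inv_into_f_f[OF inj])
    moreover have "\<forall>v\<in>emb ` P. 0 \<le> d v" unfolding d_def using c(1) by (auto simp: inv_into_f_f[OF inj])
    ultimately show "x \<in> cone_gen (emb ` P)" unfolding cone_gen_def by blast
  qed
qed

lemma cg_0: "0 \<in> cg P"
  unfolding cg_def by (rule CollectI, rule exI[of _ "\<lambda>_. 0"]) simp


lemma sum_restrict:
  assumes "finite P" "T \<subseteq> P" "\<And>v. v \<in> P - T \<Longrightarrow> f v = 0"
  shows "(\<Sum>v\<in>P. f v) = (\<Sum>v\<in>T. f v)"
  using assms by (intro sum.mono_neutral_right) auto

lemma sum_extend:
  assumes "finite P" "T \<subseteq> P"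
  shows "(\<Sum>v\<in>P. if v \<in> T then f v else 0) = (\<Sum>v\<in>T. f v)"
proof -
  have "(\<Sum>v\<in>P. if v \<in> T then f v else 0) = (\<Sum>v\<in>T. if v \<in> T then f v else 0)"
    using assms by (intro sum_restrict) auto
  then show ?thesis by simp
qed

lemma sum_extend_R:
  assumes "finite P" "T \<subseteq> P"
  shows "(\<Sum>w\<in>P. (if w \<in> T then c w else 0) *\<^sub>R (f w :: 'a::real_vector)) = (\<Sum>w\<in>T. c w *\<^sub>R f w)"
proof -
  have "(\<Sum>w\<in>P. (if w \<in> T then c w else 0) *\<^sub>R f w) = (\<Sum>w\<in>P. if w \<in> T then c w *\<^sub>R f w else 0)"
    by (rule sum.cong) auto
  also have "\<dots> = (\<Sum>w\<in>T. c w *\<^sub>R f w)" by (rule sum_extend[OF assms])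
  finally show ?thesis .
qed

lemma sum_delta_R:
  assumes "finite P" "v \<in> P"
  shows "(\<Sum>w\<in>P. (if w = v then a else 0) *\<^sub>R (f w :: 'a::real_vector)) = a *\<^sub>R f v"
proof -
  have "(\<Sum>w\<in>P. (if w = v then a else 0) *\<^sub>R f w) = (\<Sum>w\<in>P. if w = v then a *\<^sub>R f w else 0)"
    by (rule sum.cong) auto
  also have "\<dots> = a *\<^sub>R f v" using assms by (simp add: sum.delta)
  finally show ?thesis .
qed

lemma cg_gen: "finite P \<Longrightarrow> v \<in> P \<Longrightarrow> emb v \<in> cg P"
  unfolding cg_def
  by (rule CollectI, rule exI[of _ "\<lambda>w. if w = v then 1 else 0"])
     (simp add: sum_delta_R)

lemma cg_add: "x \<in> cg P \<Longrightarrow> y \<in> cg P \<Longrightarrow> x + y \<in> cg P"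
  unfolding cg_def
  apply clarify
  subgoal for c d by (rule exI[of _ "\<lambda>v. c v + d v"]) (auto simp: scaleR_add_left sum.distrib)
  done

lemma cg_scale: "x \<in> cg P \<Longrightarrow> 0 \<le> t \<Longrightarrow> t *\<^sub>R x \<in> cg P"
  unfolding cg_def
  apply clarify
  subgoal for c by (rule exI[of _ "\<lambda>v. t * c v"]) (auto simp: scaleR_sum_right)
  done

lemma cg_convex: "convex (cg P)"
  unfolding convex_def using cg_add cg_scale by blast

lemma cg_sum: "finite I \<Longrightarrow> (\<And>i. i \<in> I \<Longrightarrow> f i \<in> cg P) \<Longrightarrow> (\<Sum>i\<in>I. f i) \<in> cg P"
  by (induction I rule: finite_induct) (auto simp: cg_0 cg_add)

lemma cg_subset:
  assumes "finite P" "\<And>v. v \<in> P \<Longrightarrow> emb v \<in> cg Q"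
  shows "cg P \<subseteq> cg Q"
proof
  fix x assume "x \<in> cg P"
  then obtain c where c: "\<forall>v\<in>P. 0 \<le> c v" "x = (\<Sum>v\<in>P. c v *\<^sub>R emb v)"
    unfolding cg_def by blast
  show "x \<in> cg Q" unfolding c(2) using assms c(1) by (intro cg_sum cg_scale) auto
qed

lemma cg_mono: "finite P \<Longrightarrow> finite Q \<Longrightarrow> P \<subseteq> Q \<Longrightarrow> cg P \<subseteq> cg Q"
  by (rule cg_subset) (auto intro: cg_gen)

lemma li_finite: "li P \<Longrightarrow> finite P"
  by (simp add: li_def)

lemma liD: "li P \<Longrightarrow> (\<Sum>v\<in>P. c v *\<^sub>R emb v) = 0 \<Longrightarrow> v \<in> P \<Longrightarrow> c v = 0"
  unfolding li_def by blast

lemma li_unique: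
  assumes "li P" "(\<Sum>v\<in>P. c v *\<^sub>R emb v) = (\<Sum>v\<in>P. d v *\<^sub>R emb v)" "v \<in> P"
  shows "c v = d v"
proof -
  have "(\<Sum>v\<in>P. (c v - d v) *\<^sub>R emb v) = 0"
    using assms(2) by (simp add: scaleR_diff_left sum_subtractf)
  then show ?thesis using assms(1,3) unfolding li_def by fastforce
qed

lemma li_subset:
  assumes "li P" "T \<subseteq> P" shows "li T"
  unfolding li_def
proof (intro conjI allI impI ballI)
  have fP: "finite P" using assms li_def by blast
  show "finite T" using fP assms(2) finite_subset by blast
  fix c v assume h: "(\<Sum>v\<in>T. c v *\<^sub>R emb v) = 0" "v \<in> T"
  have "(\<Sum>w\<in>P. (if w \<in> T then c w else 0) *\<^sub>R emb w) = 0"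
    using sum_extend_R[OF fP assms(2), of c emb] h(1) by simp
  then have "(if v \<in> T then c v else 0) = 0"
    using liD[OF assms(1), of "\<lambda>w. if w \<in> T then c w else 0" v] h(2) assms(2) by blast
  then show "c v = 0" using h(2) by simp
qed

lemma li_nonzero: "li P \<Longrightarrow> v \<in> P \<Longrightarrow> v \<noteq> 0"
proof
  assume h: "li P" "v \<in> P" "v = 0"
  have "(\<Sum>w\<in>P. (if w = v then 1 else 0) *\<^sub>R emb w) = 0"
    using h sum_delta_R[of P v 1 emb] by (simp add: li_def)
  then have "(if v = v then 1 else 0 :: real) = 0" using liD[OF h(1), of "\<lambda>w. if w = v then 1 else 0" v] h by blast
  then show False by simp
qed

lemma cg_restrict:
  assumes "finite P" "T \<subseteq> P" "\<forall>v\<in>P. 0 \<le> c v" "\<And>v. v \<in> P - T \<Longrightarrow> c v = 0"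
  shows "(\<Sum>v\<in>P. c v *\<^sub>R emb v) \<in> cg T"
proof -
  have "(\<Sum>v\<in>P. c v *\<^sub>R emb v) = (\<Sum>v\<in>T. c v *\<^sub>R emb v)"
    using assms by (intro sum_restrict) auto
  then show ?thesis unfolding cg_def using assms by auto
qed

lemma cg_face:
  assumes li: "li P" and TP: "T \<subseteq> P"
  shows "cg T face_of cg P"
proof -
  have fP: "finite P" using li li_def by blast
  have fT: "finite T" using fP TP finite_subset by blast
  show ?thesis unfolding face_of_def
  proof (intro conjI ballI impI)
    show "cg T \<subseteq> cg P" by (rule cg_mono[OF fT fP TP])
    show "convex (cg T)" by (rule cg_convex)
    fix a b x assume a: "a \<in> cg P" and b: "b \<in> cg P" and x: "x \<in> cg T" and xs: "x \<in> open_segment a b"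
    obtain \<alpha> where \<alpha>: "\<forall>v\<in>P. 0 \<le> \<alpha> v" "a = (\<Sum>v\<in>P. \<alpha> v *\<^sub>R emb v)" using a unfolding cg_def by blast
    obtain \<beta> where \<beta>: "\<forall>v\<in>P. 0 \<le> \<beta> v" "b = (\<Sum>v\<in>P. \<beta> v *\<^sub>R emb v)" using b unfolding cg_def by blast
    obtain \<gamma> where \<gamma>: "\<forall>v\<in>T. 0 \<le> \<gamma> v" "x = (\<Sum>v\<in>T. \<gamma> v *\<^sub>R emb v)" using x unfolding cg_def by blast
    obtain u where u: "0 < u" "u < 1" "x = (1 - u) *\<^sub>R a + u *\<^sub>R b" using xs by (auto simp: in_segment)
    have x1: "x = (\<Sum>v\<in>P. ((1 - u) * \<alpha> v + u * \<beta> v) *\<^sub>R emb v)"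
      unfolding u(3) \<alpha>(2) \<beta>(2) by (simp add: scaleR_sum_right sum.distrib scaleR_add_left)
    have x2: "x = (\<Sum>v\<in>P. (if v \<in> T then \<gamma> v else 0) *\<^sub>R emb v)"
      by (simp only: \<gamma>(2) sum_extend_R[OF fP TP])
    have eqs: "(\<Sum>v\<in>P. ((1 - u) * \<alpha> v + u * \<beta> v) *\<^sub>R emb v) = (\<Sum>v\<in>P. (if v \<in> T then \<gamma> v else 0) *\<^sub>R emb v)"
      by (rule trans[OF x1[symmetric] x2])
    have z: "\<alpha> v = 0 \<and> \<beta> v = 0" if v: "v \<in> P - T" for v
    proof -
      have "(1 - u) * \<alpha> v + u * \<beta> v = (if v \<in> T then \<gamma> v else 0)"
        using li_unique[OF li eqs, of v] v by simp
      then have e: "(1 - u) * \<alpha> v + u * \<beta> v = 0" using v by simp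
      have "0 \<le> (1 - u) * \<alpha> v" "0 \<le> u * \<beta> v" using u \<alpha>(1) \<beta>(1) v by auto
      then have "(1 - u) * \<alpha> v = 0" "u * \<beta> v = 0" using e by linarith+
      then show ?thesis using u by auto
    qed
    show "a \<in> cg T" unfolding \<alpha>(2) using z \<alpha>(1) by (intro cg_restrict[OF fP TP]) auto
    show "b \<in> cg T" unfolding \<beta>(2) using z \<beta>(1) by (intro cg_restrict[OF fP TP]) auto
  qed
qed

lemma face_scale:
  fixes C F :: "'a::real_vector set"
  assumes F: "F face_of C" and conic: "\<And>x t. x \<in> C \<Longrightarrow> 0 \<le> t \<Longrightarrow> t *\<^sub>R x \<in> C"
    and y: "y \<in> F" and t: "0 \<le> t"
  shows "t *\<^sub>R y \<in> F"
proof (cases "y = 0")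
  case True then show ?thesis using y by simp
next
  case False
  have yC: "y \<in> C" using F y face_of_imp_subset by blast
  have zC: "0 \<in> C" using conic[OF yC, of 0] by simp
  have "y = (1 - 1/2) *\<^sub>R 0 + (1/2) *\<^sub>R (2 *\<^sub>R y)" by simp
  moreover have "0 \<noteq> 2 *\<^sub>R y" using False by simp
  ultimately have "y \<in> open_segment 0 (2 *\<^sub>R y)"
    unfolding in_segment(2) by (intro conjI exI[of _ "1/2"]) auto
  then have z: "0 \<in> F" using face_ofD[OF F _ zC conic[OF yC, of 2]] y by auto
  show ?thesis
  proof (cases "t \<le> 1")
    case True
    have "(1 - t) *\<^sub>R 0 + t *\<^sub>R y \<in> F"
      using face_of_imp_convex[OF F] z y True t by (intro convexD) auto
    then show ?thesis by simp
  next
    case False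
    have t0: "0 < t" using False by simp
    have "y = (1 - 1/t) *\<^sub>R 0 + (1/t) *\<^sub>R (t *\<^sub>R y)" using t0 by simp
    moreover have "0 \<noteq> t *\<^sub>R y" using t0 \<open>y \<noteq> 0\<close> by simp
    moreover have "0 < 1/t" "1/t < 1" using False by auto
    ultimately have "y \<in> open_segment 0 (t *\<^sub>R y)"
      unfolding in_segment(2) by blast
    then show ?thesis using face_ofD[OF F _ zC conic[OF yC t]] y by auto
  qed
qed

lemma face_gen:
  assumes fP: "finite P" and nz: "0 \<notin> P" and F: "F face_of cg P"
    and c: "\<forall>w\<in>P. 0 \<le> c w" and pF: "(\<Sum>w\<in>P. c w *\<^sub>R emb w) \<in> F"
    and v: "v \<in> P" "0 < c v"
  shows "emb v \<in> F"
proof -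
  define p where "p = (\<Sum>w\<in>P. c w *\<^sub>R emb w)"
  define b where "b = c v *\<^sub>R emb v"
  define a where "a = 2 *\<^sub>R p - b"
  have conic: "\<And>x t. x \<in> cg P \<Longrightarrow> 0 \<le> t \<Longrightarrow> t *\<^sub>R x \<in> cg P" by (rule cg_scale)
  have bC: "b \<in> cg P" unfolding b_def using cg_gen[OF fP v(1)] v(2) by (intro cg_scale) auto
  have e1: "(\<Sum>w\<in>P. (2 * c w - (if w = v then c v else 0)) *\<^sub>R emb w) =
      (\<Sum>w\<in>P. (2 * c w) *\<^sub>R emb w) - (\<Sum>w\<in>P. (if w = v then c v else 0) *\<^sub>R emb w)"
    by (simp only: scaleR_diff_left sum_subtractf)
  have e2: "(\<Sum>w\<in>P. (2 * c w) *\<^sub>R emb w) = 2 *\<^sub>R p"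
    by (simp only: p_def scaleR_sum_right scaleR_scaleR)
  have e3: "(\<Sum>w\<in>P. (if w = v then c v else 0) *\<^sub>R emb w) = b"
    unfolding b_def by (rule sum_delta_R[OF fP v(1)])
  have "a = (\<Sum>w\<in>P. (2 * c w - (if w = v then c v else 0)) *\<^sub>R emb w)"
    by (simp only: a_def e1 e2 e3)
  moreover have "\<forall>w\<in>P. 0 \<le> 2 * c w - (if w = v then c v else 0)"
  proof
    fix w assume "w \<in> P" then have "0 \<le> c w" using c by blast
    then show "0 \<le> 2 * c w - (if w = v then c v else 0)"
    proof (cases "w = v")
      case True
      then show ?thesis using \<open>0 \<le> c w\<close> by simp
    next
      case False
      then show ?thesis using \<open>0 \<le> c w\<close> by simp
    qed
  qed
  ultimately have aC: "a \<in> cg P" unfolding cg_def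
    by (intro CollectI exI[of _ "\<lambda>w. 2 * c w - (if w = v then c v else 0)"] conjI)
  have bF: "b \<in> F"
  proof (cases "a = b")
    case True
    then have "2 *\<^sub>R p = 2 *\<^sub>R b" unfolding a_def by (metis diff_eq_eq scaleR_2)
    then have "p = b" by simp
    then show ?thesis using pF p_def by simp
  next
    case False
    have "p = (1 - 1/2) *\<^sub>R a + (1/2) *\<^sub>R b" unfolding a_def by (simp add: algebra_simps)
    moreover have "(0::real) < 1/2" "(1/2::real) < 1" by auto
    ultimately have "p \<in> open_segment a b"
      using False unfolding in_segment(2) by blast
    then show ?thesis using face_ofD[OF F _ aC bC] pF p_def by blast
  qed
  have "(1 / c v) *\<^sub>R b \<in> F" using face_scale[OF F conic bF] v(2) by simp
  then show ?thesis unfolding b_def using v(2) by simp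
qed

lemma prim_exists:
  fixes z :: "int ^ 'n::finite"
  assumes "z \<noteq> 0"
  shows "\<exists>v m. primitive v \<and> 0 < m \<and> z = m *s v"
proof -
  define m where "m = Gcd (range (\<lambda>i. z $ i))"
  have dv: "m dvd z $ i" for i unfolding m_def by (rule Gcd_dvd) auto
  obtain i0 where i0: "z $ i0 \<noteq> 0" using assms by (auto simp: vec_eq_iff)
  have m0: "m \<noteq> 0" unfolding m_def using i0 by (auto simp: Gcd_0_iff)
  have mpos: "0 < m" using m0 unfolding m_def by (metis Gcd_int_greater_eq_0 less_le)
  define v where "v = (\<chi> i. z $ i div m)"
  have zv: "z = m *s v" unfolding v_def using dv by (simp add: vec_eq_iff)
  have "primitive v" unfolding primitive_def
  proof (intro conjI allI impI)
    show "v \<noteq> 0" using zv assms by auto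
    fix w k assume h: "v = k *s w"
    have "m * k dvd z $ i" for i using zv h by (simp add: vec_eq_iff)
    then have "m * k dvd m" unfolding m_def by (intro Gcd_greatest) auto
    then have "m * k dvd m * 1" by simp
    then have "k dvd 1" using m0 by (subst (asm) dvd_mult_cancel_left) simp
    then have "\<bar>k\<bar> = 1" by (simp add: zdvd1_eq)
    then show "k = 1 \<or> k = -1" by arith
  qed
  then show ?thesis using zv mpos by blast
qed

lemma prim_unique:
  fixes p v :: "int ^ 'n::finite"
  assumes pp: "primitive p" and pv: "primitive v" and e: "emb p = t *\<^sub>R emb v" and t: "0 < t"
  shows "p = v"
proof -
  have v0: "v \<noteq> 0" and p0: "p \<noteq> 0" using pp pv unfolding primitive_def by auto
  obtain i where i: "v $ i \<noteq> 0" using v0 by (auto simp: vec_eq_iff)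
  have comp: "real_of_int (p $ j) = t * real_of_int (v $ j)" for j
    using arg_cong[OF e, of "\<lambda>x. x $ j"] by (simp add: emb_def)
  have cross: "v $ i * p $ j = p $ i * v $ j" for j
  proof -
    have "real_of_int (v $ i * p $ j) = real_of_int (p $ i * v $ j)"
      using comp[of i] comp[of j] by simp
    then show ?thesis by (simp only: of_int_eq_iff)
  qed
  define g where "g = gcd (v $ i) (p $ i)"
  have g0: "g \<noteq> 0" unfolding g_def using i by simp
  define b where "b = v $ i div g"
  define a where "a = p $ i div g"
  have bg: "v $ i = g * b" unfolding b_def g_def by simp
  have ag: "p $ i = g * a" unfolding a_def g_def by simp
  have cop: "coprime b a" unfolding a_def b_def g_def using i by (intro div_gcd_coprime) auto
  have ba: "b * p $ j = a * v $ j" for j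
  proof -
    have "g * (b * p $ j) = g * (a * v $ j)" using cross[of j] bg ag by (simp add: algebra_simps)
    then show ?thesis using g0 by simp
  qed
  have bdv: "b dvd v $ j" for j
  proof -
    have "b dvd a * v $ j" using ba[of j] by (metis dvd_triv_left)
    then show ?thesis using cop by (simp add: coprime_dvd_mult_right_iff)
  qed
  define w where "w = (\<chi> j. v $ j div b)"
  have "v = b *s w" unfolding w_def using bdv by (simp add: vec_eq_iff)
  then have b1: "b = 1 \<or> b = -1" using pv unfolding primitive_def by blast
  then have "b * b = 1" by auto
  have pab: "p = (a * b) *s v"
  proof -
    have "p $ j = (a * b) * v $ j" for j
    proof -
      have "p $ j = b * (b * p $ j)" using \<open>b * b = 1\<close> by (simp add: mult.assoc[symmetric])
      also have "\<dots> = (a * b) * v $ j" using ba[of j] by (simp add: algebra_simps)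
      finally show ?thesis .
    qed
    then show ?thesis by (simp add: vec_eq_iff)
  qed
  then have ab: "a * b = 1 \<or> a * b = -1" using pp unfolding primitive_def by blast
  show ?thesis
  proof (cases "a * b = 1")
    case True then show ?thesis using pab by simp
  next
    case False
    then have "a * b = -1" using ab by simp
    then have "p = - v" using pab by (simp add: vec_eq_iff)
    then have "- emb v = t *\<^sub>R emb v" using e by (simp add: emb_uminus)
    then have "(1 + t) *\<^sub>R emb v = 0" by (metis add.commute add.right_inverse scaleR_add_left scaleR_one)
    then have "emb v = 0" using t by simp
    then show ?thesis using v0 emb_eq0 by blast
  qed
qed

lemma li_of_independent:
  assumes "finite Z" "independent (emb ` Z)"
  shows "li Z"
  unfolding li_def
proof (intro conjI allI impI ballI)
  show "finite Z" by fact
  fix c v assume h: "(\<Sum>v\<in>Z. c v *\<^sub>R emb v) = 0" "v \<in> Z"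
  have inj: "inj_on emb Z" by (rule inj_emb)
  define d where "d = (\<lambda>y. c (inv_into Z emb y))"
  have "(\<Sum>y\<in>emb ` Z. d y *\<^sub>R y) = 0"
    using h(1) by (simp add: sum.reindex[OF inj] d_def inv_into_f_f[OF inj])
  moreover have "finite (emb ` Z)" using assms by simp
  ultimately have "\<forall>y\<in>emb ` Z. d y = 0"
    using assms(2) real_vector.dependent_finite[of "emb ` Z"] by blast
  then show "c v = 0" using h(2) by (auto simp: d_def inv_into_f_f[OF inj])
qed

lemma li_scale:
  assumes li: "li Z" and f: "\<And>z. z \<in> Z \<Longrightarrow> emb (f z) = k z *\<^sub>R emb z" and k: "\<And>z. z \<in> Z \<Longrightarrow> k z \<noteq> 0"
  shows "inj_on f Z \<and> li (f ` Z)"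
proof
  have fZ: "finite Z" using li li_finite by blast
  show inj: "inj_on f Z"
  proof (rule inj_onI, rule ccontr)
    fix z1 z2 assume z: "z1 \<in> Z" "z2 \<in> Z" "f z1 = f z2" "z1 \<noteq> z2"
    define d where "d = (\<lambda>z. (if z = z1 then k z1 else 0) - (if z = z2 then k z2 else 0))"
    have "(\<Sum>z\<in>Z. d z *\<^sub>R emb z) = (\<Sum>z\<in>Z. (if z = z1 then k z1 else 0) *\<^sub>R emb z) - (\<Sum>z\<in>Z. (if z = z2 then k z2 else 0) *\<^sub>R emb z)"
      unfolding d_def by (simp only: scaleR_diff_left sum_subtractf)
    also have "\<dots> = k z1 *\<^sub>R emb z1 - k z2 *\<^sub>R emb z2"
      by (simp only: sum_delta_R[OF fZ z(1)] sum_delta_R[OF fZ z(2)])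
    also have "\<dots> = 0" using f[OF z(1)] f[OF z(2)] z(3) by simp
    finally have "d z1 = 0" using liD[OF li] z(1) by blast
    then show False using z(4) k[OF z(1)] by (simp add: d_def)
  qed
  show "li (f ` Z)" unfolding li_def
  proof (intro conjI allI impI ballI)
    show "finite (f ` Z)" using fZ by simp
    fix c p assume h: "(\<Sum>p\<in>f ` Z. c p *\<^sub>R emb p) = 0" "p \<in> f ` Z"
    have "(\<Sum>z\<in>Z. (c (f z) * k z) *\<^sub>R emb z) = (\<Sum>z\<in>Z. c (f z) *\<^sub>R emb (f z))"
      by (rule sum.cong) (auto simp: f)
    also have "\<dots> = 0" using h(1) by (simp add: sum.reindex[OF inj])
    finally have "\<forall>z\<in>Z. c (f z) * k z = 0" using liD[OF li, where c="\<lambda>z. c (f z) * k z"] by blast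
    then show "c p = 0" using h(2) k by auto
  qed
qed

lemma cg_single: "cone_gen {emb v} = cg {v}"
  using cone_gen_emb[of "{v}"] by simp

lemma cg_empty: "cg {} = {0}"
  by (auto simp: cg_def)

lemma cg_single_mem: "x \<in> cg {v} \<longleftrightarrow> (\<exists>s\<ge>0. x = s *\<^sub>R emb v)"
  by (auto simp: cg_def)

lemma ray_char:
  assumes li: "li P" and pr: "\<forall>p\<in>P. primitive p" and v: "primitive v"
    and F: "cone_gen {emb v} face_of cg P"
  shows "v \<in> P"
proof -
  have fP: "finite P" using li li_finite by blast
  have F': "cg {v} face_of cg P" using F unfolding cg_single .
  have "emb v \<in> cg {v}" by (rule cg_gen) auto
  then have "emb v \<in> cg P" using F' face_of_imp_subset by blast
  then obtain c where c: "\<forall>w\<in>P. 0 \<le> c w" "emb v = (\<Sum>w\<in>P. c w *\<^sub>R emb w)"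
    unfolding cg_def by blast
  have v0: "v \<noteq> 0" using v primitive_def by blast
  obtain p where p: "p \<in> P" "c p \<noteq> 0"
  proof (rule ccontr)
    assume "\<not> thesis"
    then have "\<forall>p\<in>P. c p = 0" using that by blast
    then have "emb v = 0" using c(2) by simp
    then show False using v0 emb_eq0 by blast
  qed
  have cp: "0 < c p" using c(1) p by force
  have nz: "0 \<notin> P" using li_nonzero[OF li] by blast
  have "emb p \<in> cg {v}"
    using face_gen[OF fP nz F' c(1) _ p(1) cp] c(2) \<open>emb v \<in> cg {v}\<close> by simp
  then obtain s where s: "s \<ge> 0" "emb p = s *\<^sub>R emb v" using cg_single_mem by blast
  have "p \<noteq> 0" using li_nonzero[OF li p(1)] .
  then have "s \<noteq> 0" using s emb_eq0 by force
  then have "0 < s" using s by simp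
  then have "p = v" using prim_unique[OF _ v s(2)] pr p(1) by blast
  then show ?thesis using p(1) by simp
qed

locale sfan =
  fixes \<Delta> :: "(real ^ 'n::finite) set set" and \<sigma> :: "(real ^ 'n) set"
  assumes subd: "rational_simplicial_subdivision \<Delta> \<sigma>"
    and ne: "\<Delta> \<noteq> {}"
begin

lemma fan: "is_fan \<Delta>" using subd rational_simplicial_subdivision_def by blast
lemma finD: "finite \<Delta>" using fan is_fan_def by blast
lemma faceD: "\<tau> \<in> \<Delta> \<Longrightarrow> F face_of \<tau> \<Longrightarrow> F \<noteq> {} \<Longrightarrow> F \<in> \<Delta>"
proof -
  assume a: "\<tau> \<in> \<Delta>" "F face_of \<tau>" "F \<noteq> {}"
  have "\<forall>\<tau>\<in>\<Delta>. \<forall>F. F face_of \<tau> \<and> F \<noteq> {} \<longrightarrow> F \<in> \<Delta>"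
    using fan unfolding is_fan_def by (elim conjE)
  then show ?thesis using a by blast
qed
lemma interD: "\<tau> \<in> \<Delta> \<Longrightarrow> \<tau>' \<in> \<Delta> \<Longrightarrow> (\<tau> \<inter> \<tau>') face_of \<tau>"
proof -
  assume a: "\<tau> \<in> \<Delta>" "\<tau>' \<in> \<Delta>"
  have "\<forall>\<tau>\<in>\<Delta>. \<forall>\<tau>'\<in>\<Delta>. (\<tau> \<inter> \<tau>') face_of \<tau> \<and> (\<tau> \<inter> \<tau>') face_of \<tau>'"
    using fan unfolding is_fan_def by (elim conjE)
  then show ?thesis using a by blast
qed
lemma unionD: "\<Union>\<Delta> = \<sigma>" using subd rational_simplicial_subdivision_def by blast

lemma rep: "\<tau> \<in> \<Delta> \<Longrightarrow> \<exists>P. li P \<and> (\<forall>p\<in>P. primitive p) \<and> \<tau> = cg P"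
proof -
  assume "\<tau> \<in> \<Delta>"
  then have "rational_simplicial_cone \<tau>" using subd rational_simplicial_subdivision_def by blast
  then obtain S where S: "finite S" "S \<subseteq> range emb" "independent S" "\<tau> = cone_gen S"
    unfolding rational_simplicial_cone_def by blast
  define Z where "Z = {z. emb z \<in> S}"
  have SZ: "S = emb ` Z" unfolding Z_def using S(2) by auto
  have fZ: "finite Z" using S(1) SZ finite_image_iff[OF inj_emb] by metis
  have liZ: "li Z" using li_of_independent[OF fZ] S(3) SZ by simp
  have z0: "z \<noteq> 0" if "z \<in> Z" for z using li_nonzero[OF liZ that] .
  define pr :: "int ^ 'n \<Rightarrow> int ^ 'n" where "pr = (\<lambda>z. SOME v. \<exists>m. primitive v \<and> 0 < m \<and> z = m *s v)"
  define mm :: "int ^ 'n \<Rightarrow> int" where "mm = (\<lambda>z. SOME m. primitive (pr z) \<and> 0 < m \<and> z = m *s pr z)"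
  have prm: "primitive (pr z) \<and> 0 < mm z \<and> z = mm z *s pr z" if "z \<in> Z" for z
  proof -
    have "\<exists>v m. primitive v \<and> 0 < m \<and> z = m *s v" using prim_exists[OF z0[OF that]] .
    then have "\<exists>m. primitive (pr z) \<and> 0 < m \<and> z = m *s pr z" unfolding pr_def by (rule someI_ex)
    then show ?thesis unfolding mm_def by (rule someI_ex)
  qed
  have embp: "emb (pr z) = (1 / real_of_int (mm z)) *\<^sub>R emb z" if "z \<in> Z" for z
  proof -
    have "emb z = real_of_int (mm z) *\<^sub>R emb (pr z)" using prm[OF that] emb_smult by metis
    then show ?thesis using prm[OF that] by simp
  qed
  have k0: "\<And>z. z \<in> Z \<Longrightarrow> 1 / real_of_int (mm z) \<noteq> 0" using prm by fastforce
  have liP: "li (pr ` Z)" using li_scale[OF liZ embp k0] by blast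
  have eq: "cg Z = cg (pr ` Z)"
  proof
    show "cg Z \<subseteq> cg (pr ` Z)"
    proof (rule cg_subset[OF fZ])
      fix z assume z: "z \<in> Z"
      have "emb z = real_of_int (mm z) *\<^sub>R emb (pr z)" using prm[OF z] emb_smult by metis
      moreover have "emb (pr z) \<in> cg (pr ` Z)" using z fZ by (intro cg_gen) auto
      ultimately show "emb z \<in> cg (pr ` Z)" using prm[OF z] by (simp add: cg_scale)
    qed
    show "cg (pr ` Z) \<subseteq> cg Z"
    proof (rule cg_subset)
      show "finite (pr ` Z)" using fZ by simp
      fix p assume "p \<in> pr ` Z"
      then obtain z where z: "z \<in> Z" "p = pr z" by blast
      have "emb z \<in> cg Z" using z fZ by (intro cg_gen) auto
      then show "emb p \<in> cg Z" using embp[OF z(1)] z(2) prm[OF z(1)] by (simp add: cg_scale)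
    qed
  qed
  have "\<tau> = cg Z" using S(4) SZ cone_gen_emb by simp
  then show ?thesis using liP eq prm by (intro exI[of _ "pr ` Z"]) auto
qed

lemma gens_char:
  assumes "\<tau> \<in> \<Delta>" "li P" "\<forall>p\<in>P. primitive p" "\<tau> = cg P"
  shows "gens \<Delta> \<tau> = P"
proof
  show "gens \<Delta> \<tau> \<subseteq> P"
    using ray_char[OF assms(2,3)] assms(4) unfolding gens_def ray_gens_def by auto
  show "P \<subseteq> gens \<Delta> \<tau>"
  proof
    fix p assume p: "p \<in> P"
    have face: "cone_gen {emb p} face_of \<tau>"
      unfolding cg_single assms(4) using cg_face[OF assms(2), of "{p}"] p by simp
    have "cone_gen {emb p} \<noteq> {}" using cg_single cg_0 by blast
    then have "cone_gen {emb p} \<in> \<Delta>" using faceD[OF assms(1) face] by blast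
    then show "p \<in> gens \<Delta> \<tau>" using face p assms(3) unfolding gens_def ray_gens_def by auto
  qed
qed

abbreviation g where "g \<equiv> gens \<Delta>"

lemma g_props: "\<tau> \<in> \<Delta> \<Longrightarrow> li (g \<tau>) \<and> \<tau> = cg (g \<tau>) \<and> (\<forall>p\<in>g \<tau>. primitive p)"
  using rep gens_char by metis

lemma g_li: "\<tau> \<in> \<Delta> \<Longrightarrow> li (g \<tau>)" using g_props by blast
lemma g_cg: "\<tau> \<in> \<Delta> \<Longrightarrow> \<tau> = cg (g \<tau>)" using g_props by blast
lemma g_fin: "\<tau> \<in> \<Delta> \<Longrightarrow> finite (g \<tau>)" using g_li li_finite by blast
lemma g_prim: "\<tau> \<in> \<Delta> \<Longrightarrow> p \<in> g \<tau> \<Longrightarrow> primitive p" using g_props by blast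

lemma sub_in:
  assumes "\<tau> \<in> \<Delta>" "T \<subseteq> g \<tau>"
  shows "cg T \<in> \<Delta> \<and> g (cg T) = T"
proof -
  have face: "cg T face_of \<tau>" using cg_face[OF g_li[OF assms(1)] assms(2)] g_cg[OF assms(1)] by simp
  have in\<Delta>: "cg T \<in> \<Delta>" using faceD[OF assms(1) face] cg_0 by blast
  have "li T" using li_subset[OF g_li[OF assms(1)] assms(2)] .
  moreover have "\<forall>p\<in>T. primitive p" using g_prim[OF assms(1)] assms(2) by blast
  ultimately show ?thesis using gens_char[OF in\<Delta>] in\<Delta> by blast
qed

lemma g_inj: "\<tau> \<in> \<Delta> \<Longrightarrow> \<rho> \<in> \<Delta> \<Longrightarrow> g \<tau> = g \<rho> \<Longrightarrow> \<tau> = \<rho>"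
  using g_cg by metis

lemma R_fin: "finite (ray_gens \<Delta>)"
proof -
  have "ray_gens \<Delta> \<subseteq> (\<Union>\<tau>\<in>\<Delta>. g \<tau>)"
  proof
    fix v assume v: "v \<in> ray_gens \<Delta>"
    then have c: "cone_gen {emb v} \<in> \<Delta>" "primitive v" unfolding ray_gens_def by auto
    have "cone_gen {emb v} face_of cone_gen {emb v}"
      using cg_single cg_convex face_of_refl by metis
    then have "v \<in> g (cone_gen {emb v})" using v unfolding gens_def by blast
    then show "v \<in> (\<Union>\<tau>\<in>\<Delta>. g \<tau>)" using c by blast
  qed
  moreover have "finite (\<Union>\<tau>\<in>\<Delta>. g \<tau>)" using finD g_fin by blast
  ultimately show ?thesis using finite_subset by blast
qed

lemma g_R: "g \<tau> \<subseteq> ray_gens \<Delta>" unfolding gens_def by blast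

lemma zero_in: "{0} \<in> \<Delta>" "g {0} = {}"
proof -
  obtain \<tau> where t: "\<tau> \<in> \<Delta>" using ne by blast
  have "cg {} \<in> \<Delta> \<and> g (cg {}) = {}" using sub_in[OF t, of "{}"] by blast
  then show "{0} \<in> \<Delta>" "g {0} = {}" unfolding cg_empty by auto
qed

lemma sub_iff:
  assumes "\<tau> \<in> \<Delta>" "\<rho> \<in> \<Delta>"
  shows "\<tau> \<subseteq> \<rho> \<longleftrightarrow> g \<tau> \<subseteq> g \<rho>"
proof
  assume "\<tau> \<subseteq> \<rho>"
  then have f: "\<tau> face_of \<rho>" using interD[OF assms(2,1)] by (simp add: Int_absorb1 inf_commute)
  show "g \<tau> \<subseteq> g \<rho>" unfolding gens_def using face_of_trans[OF _ f] by blast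
next
  assume "g \<tau> \<subseteq> g \<rho>"
  then show "\<tau> \<subseteq> \<rho>" using g_cg[OF assms(1)] g_cg[OF assms(2)] cg_mono g_fin assms by metis
qed

lemma comb_mem:
  assumes "\<rho> \<in> \<Delta>" "\<forall>v\<in>g \<rho>. 0 \<le> c v"
  shows "(\<Sum>v\<in>g \<rho>. c v *\<^sub>R emb v) \<in> \<rho>"
proof -
  have "(\<Sum>v\<in>g \<rho>. c v *\<^sub>R emb v) \<in> cg (g \<rho>)" unfolding cg_def using assms(2) by blast
  then show ?thesis using g_cg[OF assms(1)] by simp
qed

lemma comb_mem': "\<rho> \<in> \<Delta> \<Longrightarrow> \<forall>v\<in>g \<rho>. 0 < c v \<Longrightarrow> (\<Sum>v\<in>g \<rho>. c v *\<^sub>R emb v) \<in> \<rho>"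
  by (rule comb_mem) (auto intro: less_imp_le)

lemma relint_sub:
  assumes r: "\<rho> \<in> \<Delta>" "\<rho>' \<in> \<Delta>" and c: "\<forall>v\<in>g \<rho>. 0 < c v"
    and x: "(\<Sum>v\<in>g \<rho>. c v *\<^sub>R emb v) \<in> \<rho>'"
  shows "\<rho> \<subseteq> \<rho>'"
proof -
  have F: "(\<rho> \<inter> \<rho>') face_of cg (g \<rho>)" using interD[OF r] g_cg[OF r(1)] by simp
  have xr: "(\<Sum>v\<in>g \<rho>. c v *\<^sub>R emb v) \<in> \<rho>" by (rule comb_mem'[OF r(1) c])
  have nz: "0 \<notin> g \<rho>" using li_nonzero[OF g_li[OF r(1)]] by blast
  have "emb v \<in> \<rho> \<inter> \<rho>'" if "v \<in> g \<rho>" for v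
    using face_gen[OF g_fin[OF r(1)] nz F _ _ that] c x xr that by (auto intro: less_imp_le)
  then have "cg (g \<rho>) \<subseteq> cg (g \<rho>')"
    using g_cg[OF r(2)] by (intro cg_subset[OF g_fin[OF r(1)]]) auto
  then show ?thesis using g_cg r by metis
qed

lemma relint_unique:
  assumes r: "\<rho> \<in> \<Delta>" "\<rho>' \<in> \<Delta>" and c: "\<forall>v\<in>g \<rho>. 0 < c v" and c': "\<forall>v\<in>g \<rho>'. 0 < c' v"
    and eq: "(\<Sum>v\<in>g \<rho>. c v *\<^sub>R emb v) = (\<Sum>v\<in>g \<rho>'. c' v *\<^sub>R emb v)"
  shows "\<rho> = \<rho>'"
proof -
  have x1: "(\<Sum>v\<in>g \<rho>. c v *\<^sub>R emb v) \<in> \<rho>'"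
    unfolding eq by (rule comb_mem'[OF r(2) c'])
  have x2: "(\<Sum>v\<in>g \<rho>'. c' v *\<^sub>R emb v) \<in> \<rho>"
    unfolding eq[symmetric] by (rule comb_mem'[OF r(1) c])
  show ?thesis using relint_sub[OF r c x1] relint_sub[OF r(2,1) c' x2] by blast
qed

lemma relint_exists:
  assumes "x \<in> \<sigma>"
  shows "\<exists>\<rho>\<in>\<Delta>. \<exists>c. (\<forall>v\<in>g \<rho>. 0 < c v) \<and> x = (\<Sum>v\<in>g \<rho>. c v *\<^sub>R emb v)"
proof -
  obtain \<tau> where t: "\<tau> \<in> \<Delta>" "x \<in> \<tau>" using assms unionD by blast
  then obtain c where c: "\<forall>v\<in>g \<tau>. 0 \<le> c v" "x = (\<Sum>v\<in>g \<tau>. c v *\<^sub>R emb v)"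
    using g_cg[OF t(1)] unfolding cg_def by blast
  define T where "T = {v\<in>g \<tau>. 0 < c v}"
  have T: "T \<subseteq> g \<tau>" unfolding T_def by blast
  have "x = (\<Sum>v\<in>T. c v *\<^sub>R emb v)"
    unfolding c(2) using c(1) by (intro sum_restrict[OF g_fin[OF t(1)] T]) (auto simp: T_def)
  moreover have "\<forall>v\<in>T. 0 < c v" unfolding T_def by blast
  ultimately show ?thesis using sub_in[OF t(1) T] by metis
qed

end

context sfan begin

definition M :: "(real ^ 'n) set \<Rightarrow> (real ^ 'n) set \<Rightarrow> (real ^ 'n) set" where
  "M \<gamma> \<tau> = {a + b | a b. a \<in> \<gamma> \<and> b \<in> \<tau>}"

lemma lk_alt: "\<gamma> \<in> lk \<Delta> \<tau> \<longleftrightarrow> \<gamma> \<in> \<Delta> \<and> \<gamma> \<inter> \<tau> = {0} \<and> M \<gamma> \<tau> \<in> \<Delta>"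
  unfolding lk_def M_def by blast

lemma zero_mem: "\<tau> \<in> \<Delta> \<Longrightarrow> 0 \<in> \<tau>"
  using g_cg cg_0 by metis

lemma add_mem: "\<tau> \<in> \<Delta> \<Longrightarrow> x \<in> \<tau> \<Longrightarrow> y \<in> \<tau> \<Longrightarrow> x + y \<in> \<tau>"
  using g_cg cg_add by metis

lemma gen_mem: "\<tau> \<in> \<Delta> \<Longrightarrow> v \<in> g \<tau> \<Longrightarrow> emb v \<in> \<tau>"
  using g_cg cg_gen g_fin by metis

lemma M_sup1: "\<tau> \<in> \<Delta> \<Longrightarrow> \<gamma> \<subseteq> M \<gamma> \<tau>"
  unfolding M_def using zero_mem by force

lemma M_sup2: "\<gamma> \<in> \<Delta> \<Longrightarrow> \<tau> \<subseteq> M \<gamma> \<tau>"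
  unfolding M_def using zero_mem by force

lemma lk_props:
  assumes t: "\<tau> \<in> \<Delta>" and l: "\<gamma> \<in> lk \<Delta> \<tau>"
  shows "\<gamma> \<in> \<Delta>" "g \<gamma> \<inter> g \<tau> = {}" "M \<gamma> \<tau> \<in> \<Delta>" "g (M \<gamma> \<tau>) = g \<gamma> \<union> g \<tau>"
proof -
  have i0: "\<gamma> \<inter> \<tau> = {0}" using l lk_alt by auto
  show gD: "\<gamma> \<in> \<Delta>" and rD: "M \<gamma> \<tau> \<in> \<Delta>" using l lk_alt by auto
  show disj: "g \<gamma> \<inter> g \<tau> = {}"
  proof (rule ccontr)
    assume "g \<gamma> \<inter> g \<tau> \<noteq> {}"
    then obtain v where v: "v \<in> g \<gamma>" "v \<in> g \<tau>" by blast
    then have "emb v \<in> \<gamma> \<inter> \<tau>" using gen_mem gD t by blast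
    then have "v = 0" using i0 emb_eq0 by auto
    then show False using li_nonzero[OF g_li[OF t] v(2)] by simp
  qed
  let ?\<rho> = "M \<gamma> \<tau>"
  let ?Q = "g \<gamma> \<union> g \<tau>"
  have s1: "g \<gamma> \<subseteq> g ?\<rho>" using sub_iff[OF gD rD] M_sup1[OF t] by blast
  have s2: "g \<tau> \<subseteq> g ?\<rho>" using sub_iff[OF t rD] M_sup2[OF gD] by blast
  have Qs: "?Q \<subseteq> g ?\<rho>" using s1 s2 by blast
  have fr: "finite (g ?\<rho>)" using g_fin[OF rD] .
  have fQ: "finite ?Q" using g_fin[OF gD] g_fin[OF t] by blast
  have "g ?\<rho> \<subseteq> ?Q"
  proof
    fix p assume p: "p \<in> g ?\<rho>"
    have "emb p \<in> ?\<rho>" using gen_mem[OF rD p] .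
    then obtain a b where ab: "emb p = a + b" "a \<in> \<gamma>" "b \<in> \<tau>" unfolding M_def by blast
    have "a \<in> cg ?Q" using ab(2) g_cg[OF gD] cg_mono[OF g_fin[OF gD] fQ] by blast
    moreover have "b \<in> cg ?Q" using ab(3) g_cg[OF t] cg_mono[OF g_fin[OF t] fQ] by blast
    ultimately have "emb p \<in> cg ?Q" using ab(1) cg_add by simp
    then obtain d where d: "\<forall>v\<in>?Q. 0 \<le> d v" "emb p = (\<Sum>v\<in>?Q. d v *\<^sub>R emb v)" unfolding cg_def by blast
    have "(\<Sum>v\<in>g ?\<rho>. (if v \<in> ?Q then d v else 0) *\<^sub>R emb v) = emb p"
      using sum_extend_R[OF fr Qs] d(2) by simp
    also have "\<dots> = (\<Sum>v\<in>g ?\<rho>. (if v = p then 1 else 0) *\<^sub>R emb v)"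
      using sum_delta_R[OF fr p, of 1 emb] by simp
    finally have eq: "(\<Sum>v\<in>g ?\<rho>. (if v \<in> ?Q then d v else 0) *\<^sub>R emb v) = (\<Sum>v\<in>g ?\<rho>. (if v = p then 1 else 0) *\<^sub>R emb v)" .
    have "(if p \<in> ?Q then d p else 0) = (if p = p then 1 else (0::real))"
      by (rule li_unique[OF g_li[OF rD] eq p])
    then show "p \<in> ?Q" by (cases "p \<in> ?Q") auto
  qed
  then show "g ?\<rho> = ?Q" using Qs by blast
qed

lemma lk_char:
  assumes t: "\<tau> \<in> \<Delta>" and r: "\<rho> \<in> \<Delta>" and sub: "g \<tau> \<subseteq> g \<rho>"
  shows "cg (g \<rho> - g \<tau>) \<in> lk \<Delta> \<tau>" "M (cg (g \<rho> - g \<tau>)) \<tau> = \<rho>" "g (cg (g \<rho> - g \<tau>)) = g \<rho> - g \<tau>"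
proof -
  let ?\<gamma> = "cg (g \<rho> - g \<tau>)"
  have D: "g \<rho> - g \<tau> \<subseteq> g \<rho>" by blast
  have gD: "?\<gamma> \<in> \<Delta>" and gg: "g ?\<gamma> = g \<rho> - g \<tau>" using sub_in[OF r D] by auto
  then show "g ?\<gamma> = g \<rho> - g \<tau>" by simp
  have fr: "finite (g \<rho>)" using g_fin[OF r] .
  have "?\<gamma> \<inter> \<tau> \<subseteq> {0}"
  proof
    fix x assume x: "x \<in> ?\<gamma> \<inter> \<tau>"
    obtain a where a: "\<forall>v\<in>g \<rho> - g \<tau>. 0 \<le> a v" "x = (\<Sum>v\<in>g \<rho> - g \<tau>. a v *\<^sub>R emb v)"
      using x unfolding cg_def by blast
    obtain b where b: "\<forall>v\<in>g \<tau>. 0 \<le> b v" "x = (\<Sum>v\<in>g \<tau>. b v *\<^sub>R emb v)"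
      using x g_cg[OF t] unfolding cg_def by blast
    have e: "(\<Sum>v\<in>g \<rho>. (if v \<in> g \<rho> - g \<tau> then a v else 0) *\<^sub>R emb v) = (\<Sum>v\<in>g \<rho>. (if v \<in> g \<tau> then b v else 0) *\<^sub>R emb v)"
      using sum_extend_R[OF fr D, of a emb] sum_extend_R[OF fr sub, of b emb] a(2) b(2) by simp
    have "\<forall>v\<in>g \<rho> - g \<tau>. a v = 0"
    proof
      fix v assume v: "v \<in> g \<rho> - g \<tau>"
      then show "a v = 0" using li_unique[OF g_li[OF r] e, of v] by simp
    qed
    then show "x \<in> {0}" using a(2) by simp
  qed
  moreover have "0 \<in> ?\<gamma> \<inter> \<tau>" using cg_0 zero_mem[OF t] by blast
  ultimately have i0: "?\<gamma> \<inter> \<tau> = {0}" by blast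
  have Meq: "M ?\<gamma> \<tau> = \<rho>"
  proof
    have "?\<gamma> \<subseteq> \<rho>" using sub_iff[OF gD r] gg by blast
    moreover have "\<tau> \<subseteq> \<rho>" using sub_iff[OF t r] sub by blast
    ultimately show "M ?\<gamma> \<tau> \<subseteq> \<rho>" unfolding M_def using add_mem[OF r] by blast
    show "\<rho> \<subseteq> M ?\<gamma> \<tau>"
    proof
      fix x assume "x \<in> \<rho>"
      then obtain c where c: "\<forall>v\<in>g \<rho>. 0 \<le> c v" "x = (\<Sum>v\<in>g \<rho>. c v *\<^sub>R emb v)"
        using g_cg[OF r] unfolding cg_def by blast
      have "x = (\<Sum>v\<in>g \<rho> - g \<tau>. c v *\<^sub>R emb v) + (\<Sum>v\<in>g \<tau>. c v *\<^sub>R emb v)"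
        using c(2) sum.subset_diff[OF sub fr] by simp
      moreover have "(\<Sum>v\<in>g \<rho> - g \<tau>. c v *\<^sub>R emb v) \<in> ?\<gamma>" unfolding cg_def using c(1) by blast
      moreover have "(\<Sum>v\<in>g \<tau>. c v *\<^sub>R emb v) \<in> \<tau>" using comb_mem[OF t] c(1) sub by blast
      ultimately show "x \<in> M ?\<gamma> \<tau>" unfolding M_def by blast
    qed
  qed
  then show "M ?\<gamma> \<tau> = \<rho>" .
  show "?\<gamma> \<in> lk \<Delta> \<tau>" unfolding lk_alt using gD i0 Meq r by simp
qed

lemma lk_bij:
  assumes t: "\<tau> \<in> \<Delta>"
  shows "bij_betw (\<lambda>\<gamma>. M \<gamma> \<tau>) (lk \<Delta> \<tau>) {\<rho>\<in>\<Delta>. g \<tau> \<subseteq> g \<rho>}"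
  unfolding bij_betw_def
proof (intro conjI)
  show "inj_on (\<lambda>\<gamma>. M \<gamma> \<tau>) (lk \<Delta> \<tau>)"
  proof (rule inj_onI)
    fix \<gamma>1 \<gamma>2 assume a: "\<gamma>1 \<in> lk \<Delta> \<tau>" "\<gamma>2 \<in> lk \<Delta> \<tau>" "M \<gamma>1 \<tau> = M \<gamma>2 \<tau>"
    have "g \<gamma>1 \<union> g \<tau> = g \<gamma>2 \<union> g \<tau>" using lk_props(4)[OF t a(1)] lk_props(4)[OF t a(2)] a(3) by simp
    moreover have "g \<gamma>1 \<inter> g \<tau> = {}" "g \<gamma>2 \<inter> g \<tau> = {}" using lk_props(2)[OF t] a by auto
    ultimately have "g \<gamma>1 = g \<gamma>2" by blast
    then show "\<gamma>1 = \<gamma>2" using g_inj lk_props(1)[OF t] a by blast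
  qed
  show "(\<lambda>\<gamma>. M \<gamma> \<tau>) ` lk \<Delta> \<tau> = {\<rho> \<in> \<Delta>. g \<tau> \<subseteq> g \<rho>}"
  proof
    show "(\<lambda>\<gamma>. M \<gamma> \<tau>) ` lk \<Delta> \<tau> \<subseteq> {\<rho> \<in> \<Delta>. g \<tau> \<subseteq> g \<rho>}"
      using lk_props[OF t] by auto
    show "{\<rho> \<in> \<Delta>. g \<tau> \<subseteq> g \<rho>} \<subseteq> (\<lambda>\<gamma>. M \<gamma> \<tau>) ` lk \<Delta> \<tau>"
    proof
      fix \<rho> assume "\<rho> \<in> {\<rho> \<in> \<Delta>. g \<tau> \<subseteq> g \<rho>}"
      then have r: "\<rho> \<in> \<Delta>" "g \<tau> \<subseteq> g \<rho>" by auto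
      show "\<rho> \<in> (\<lambda>\<gamma>. M \<gamma> \<tau>) ` lk \<Delta> \<tau>"
        using lk_char[OF t r] by (metis image_eqI)
    qed
  qed
qed

lemma max_exists:
  assumes "\<rho> \<in> \<Delta>" shows "\<exists>\<delta>. maximal_cone \<Delta> \<delta> \<and> \<rho> \<subseteq> \<delta>"
proof -
  obtain m where m: "m \<in> {\<delta>\<in>\<Delta>. \<rho> \<subseteq> \<delta>}" "\<forall>b\<in>{\<delta>\<in>\<Delta>. \<rho> \<subseteq> \<delta>}. m \<le> b \<longrightarrow> m = b"
    using finite_has_maximal[of "{\<delta>\<in>\<Delta>. \<rho> \<subseteq> \<delta>}"] finD assms by auto
  have "maximal_cone \<Delta> m" unfolding maximal_cone_def using m by auto
  then show ?thesis using m by blast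
qed

lemma lkg_R: "lk_gens \<Delta> \<tau> \<subseteq> ray_gens \<Delta>"
  unfolding lk_gens_def using g_R by blast

lemma lk_fin: "finite (lk \<Delta> \<tau>)"
  using finD unfolding lk_def by simp

lemma lkg_disj: "\<tau> \<in> \<Delta> \<Longrightarrow> g \<tau> \<inter> lk_gens \<Delta> \<tau> = {}"
  unfolding lk_gens_def using lk_props(2) by blast

lemma star_eq:
  assumes t: "\<tau> \<in> \<Delta>"
  shows "star_gens \<Delta> \<tau> = g \<tau> \<union> lk_gens \<Delta> \<tau>"
proof
  show "star_gens \<Delta> \<tau> \<subseteq> g \<tau> \<union> lk_gens \<Delta> \<tau>"
  proof
    fix v assume "v \<in> star_gens \<Delta> \<tau>"
    then obtain \<delta> where d: "maximal_cone \<Delta> \<delta>" "\<tau> \<subseteq> \<delta>" "v \<in> g \<delta>" unfolding star_gens_def by blast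
    have dD: "\<delta> \<in> \<Delta>" using d(1) maximal_cone_def by blast
    have sub: "g \<tau> \<subseteq> g \<delta>" using sub_iff[OF t dD] d(2) by blast
    show "v \<in> g \<tau> \<union> lk_gens \<Delta> \<tau>"
    proof (cases "v \<in> g \<tau>")
      case True then show ?thesis by blast
    next
      case False
      have I: "insert v (g \<tau>) \<subseteq> g \<delta>" using sub d(3) by blast
      have r: "cg (insert v (g \<tau>)) \<in> \<Delta>" "g (cg (insert v (g \<tau>))) = insert v (g \<tau>)"
        using sub_in[OF dD I] by auto
      have "g \<tau> \<subseteq> g (cg (insert v (g \<tau>)))" using r(2) by blast
      note L = lk_char[OF t r(1) this]
      have "v \<in> g (cg (g (cg (insert v (g \<tau>))) - g \<tau>))" using L(3) r(2) False by simp
      then show ?thesis using L(1) unfolding lk_gens_def by blast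
    qed
  qed
  show "g \<tau> \<union> lk_gens \<Delta> \<tau> \<subseteq> star_gens \<Delta> \<tau>"
  proof
    fix v assume v: "v \<in> g \<tau> \<union> lk_gens \<Delta> \<tau>"
    show "v \<in> star_gens \<Delta> \<tau>"
    proof (cases "v \<in> g \<tau>")
      case True
      obtain \<delta> where d: "maximal_cone \<Delta> \<delta>" "\<tau> \<subseteq> \<delta>" using max_exists[OF t] by blast
      have "\<delta> \<in> \<Delta>" using d(1) maximal_cone_def by blast
      then have "v \<in> g \<delta>" using sub_iff[OF t] d(2) True by blast
      then show ?thesis unfolding star_gens_def using d by blast
    next
      case False
      then obtain \<gamma> where gm: "\<gamma> \<in> lk \<Delta> \<tau>" "v \<in> g \<gamma>" using v unfolding lk_gens_def by blast
      have rD: "M \<gamma> \<tau> \<in> \<Delta>" using lk_props(3)[OF t gm(1)] .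
      obtain \<delta> where d: "maximal_cone \<Delta> \<delta>" "M \<gamma> \<tau> \<subseteq> \<delta>" using max_exists[OF rD] by blast
      have dD: "\<delta> \<in> \<Delta>" using d(1) maximal_cone_def by blast
      have "\<tau> \<subseteq> \<delta>" using M_sup2[OF lk_props(1)[OF t gm(1)]] d(2) by blast
      moreover have "v \<in> g \<delta>" using sub_iff[OF rD dD] d(2) lk_props(4)[OF t gm(1)] gm(2) by blast
      ultimately show ?thesis unfolding star_gens_def using d(1) by blast
    qed
  qed
qed

end

lemma sum_ind1: "finite A \<Longrightarrow> (\<Sum>x\<in>A. f x * (if a = x then 1 else 0)) = (if a \<in> A then f a else (0::'a::comm_ring_1))"
proof -
  assume f: "finite A"
  have "(\<Sum>x\<in>A. f x * (if a = x then 1 else 0)) = (\<Sum>x\<in>A. if a = x then f x else 0)" by (rule sum.cong) auto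
  then show ?thesis using f by (simp add: sum.delta)
qed

lemma sum_ind2: "finite A \<Longrightarrow> (\<Sum>x\<in>A. f x * (if x = a then 1 else 0)) = (if a \<in> A then f a else (0::'a::comm_ring_1))"
proof -
  assume f: "finite A"
  have "(\<Sum>x\<in>A. f x * (if x = a then 1 else 0)) = (\<Sum>x\<in>A. if x = a then f x else 0)" by (rule sum.cong) auto
  then show ?thesis using f by (simp add: sum.delta')
qed

lemma sum_ind3: "finite A \<Longrightarrow> (\<Sum>x\<in>A. (if x = a then 1 else 0) * f x) = (if a \<in> A then f a else (0::'a::comm_ring_1))"
  using sum_ind2[of A f a] by (simp add: mult.commute)

lemma sum_ind4: "finite A \<Longrightarrow> (\<Sum>x\<in>A. (if a = x then 1 else 0) * f x) = (if a \<in> A then f a else (0::'a::comm_ring_1))"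
  using sum_ind1[of A f a] by (simp add: mult.commute)

definition ee :: "'n::finite \<Rightarrow> int ^ 'n" where "ee i = (\<chi> j. if j = i then 1 else 0)"

lemma ee_comp: "ee k $ i = (if i = k then 1 else 0)"
  by (simp add: ee_def)

lemma ee_inj: "inj ee"
proof (rule injI)
  fix i j assume "ee i = ee j"
  then have "ee i $ i = ee j $ i" by simp
  then show "i = j" unfolding ee_def by (auto split: if_splits)
qed

lemma vec_expand: "(w :: int ^ 'n::finite) = (\<Sum>i\<in>UNIV. (w $ i) *s ee i)"
proof -
  have A: "w $ j = (\<Sum>i\<in>UNIV. w $ i * (if j = i then 1 else 0))" for j
    by (simp only: sum_ind1[OF finite_class.finite_UNIV]) simp
  have B: "(\<Sum>i\<in>UNIV. (w $ i) *s ee i) $ j = (\<Sum>i\<in>UNIV. w $ i * (if j = i then 1 else 0))" for j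
    by (simp only: sum_component vector_smult_component ee_def vec_lambda_beta)
  show ?thesis unfolding vec_eq_iff by (intro allI, rule trans[OF A B[symmetric]])
qed

lemma smult_sum_comp: "(\<Sum>b\<in>X. c b *s (h b :: int ^ 'n::finite)) $ j = (\<Sum>b\<in>X. c b * h b $ j)"
  by (simp only: sum_component vector_smult_component)

lemma zbasis_std: "zbasis (range (ee :: 'n::finite \<Rightarrow> int ^ 'n))"
  unfolding zbasis_def
proof (intro conjI allI impI ballI)
  show "finite (range (ee :: 'n \<Rightarrow> int ^ 'n))" by simp
  fix w :: "int ^ 'n"
  define c where "c = (\<lambda>b::int^'n. \<Sum>j\<in>UNIV. b $ j * w $ j)"
  have ce: "c (ee i) = w $ i" for i
    unfolding c_def ee_def by (simp only: vec_lambda_beta sum_ind3[OF finite_class.finite_UNIV]) simp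
  have "(\<Sum>b\<in>range ee. c b *s b) = (\<Sum>i\<in>UNIV. c (ee i) *s ee i)"
    by (simp add: sum.reindex[OF ee_inj])
  also have "\<dots> = w" using vec_expand[of w] by (simp add: ce)
  finally show "\<exists>c. w = (\<Sum>b\<in>range ee. c b *s b)" by metis
next
  fix c :: "int ^ 'n \<Rightarrow> int" and b assume h: "(\<Sum>b\<in>range ee. c b *s b) = 0" and b: "b \<in> range (ee :: 'n \<Rightarrow> int ^ 'n)"
  then obtain i :: 'n where i: "b = ee i" by blast
  have "(\<Sum>k\<in>UNIV. c (ee k) *s ee k) = 0" using h by (simp add: sum.reindex[OF ee_inj])
  then have "(\<Sum>k\<in>UNIV. c (ee k) *s ee k) $ i = 0" by simp
  then have "(\<Sum>k\<in>UNIV. c (ee k) * (if i = k then 1 else 0)) = 0"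
    unfolding smult_sum_comp ee_comp .
  then have "c (ee i) = 0" by (simp only: sum_ind1[OF finite_class.finite_UNIV]) simp
  then show "c b = 0" using i by simp
qed

lemma unimodular_zero: "unimodular ({0} :: (real ^ 'n::finite) set)"
  unfolding unimodular_def
proof (intro exI conjI)
  show "{} \<subseteq> range (ee :: 'n \<Rightarrow> int ^ 'n)" by simp
  show "zbasis (range (ee :: 'n \<Rightarrow> int ^ 'n))" by (rule zbasis_std)
  show "({0} :: (real ^ 'n) set) = cone_gen (emb ` {})" by (auto simp: cone_gen_def)
qed

lemma zbasis_li:
  fixes Bz :: "(int ^ 'n::finite) set"
  assumes z: "zbasis Bz"
  shows "li Bz"
proof -
  have zb: "finite Bz \<and> (\<forall>w. \<exists>c. w = (\<Sum>b\<in>Bz. c b *s b)) \<and> (\<forall>c. (\<Sum>b\<in>Bz. c b *s b) = 0 \<longrightarrow> (\<forall>b\<in>Bz. c b = 0))"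
    using z unfolding zbasis_def .
  have fB: "finite Bz" using zb by (elim conjE)
  have span: "\<forall>w. \<exists>c. w = (\<Sum>b\<in>Bz. c b *s b)" using zb by (elim conjE)
  have uniq0: "\<forall>c. (\<Sum>b\<in>Bz. c b *s b) = 0 \<longrightarrow> (\<forall>b\<in>Bz. c b = 0)" using zb by (elim conjE)
  have uniq: "\<And>c b. (\<Sum>b\<in>Bz. c b *s b) = 0 \<Longrightarrow> b \<in> Bz \<Longrightarrow> c b = 0"
  proof -
    fix c b assume "(\<Sum>b\<in>Bz. c b *s b) = 0" "b \<in> Bz"
    then show "c b = 0" using uniq0 by blast
  qed
  have "\<forall>i. \<exists>c. ee i = (\<Sum>b\<in>Bz. c b *s b)" using span by blast
  from choice[OF this] obtain C where C: "\<And>i. ee i = (\<Sum>b\<in>Bz. C i b *s b)" by blast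
  have delta: "(\<Sum>i\<in>UNIV. b0 $ i * C i b) = (if b = b0 then 1 else 0)" if b0: "b0 \<in> Bz" and b: "b \<in> Bz" for b0 b
  proof -
    have X: "b0 $ j = (\<Sum>b\<in>Bz. (\<Sum>i\<in>UNIV. b0 $ i * C i b) * b $ j)" for j
    proof -
      have e0: "(\<Sum>i\<in>UNIV. (b0 $ i) *s ee i) = b0" by (rule vec_expand[symmetric])
      have "b0 $ j = (\<Sum>i\<in>UNIV. (b0 $ i) *s ee i) $ j" by (simp only: e0)
      also have "\<dots> = (\<Sum>i\<in>UNIV. (b0 $ i) * (ee i $ j))" by (simp only: smult_sum_comp)
      also have "\<dots> = (\<Sum>i\<in>UNIV. (b0 $ i) * (\<Sum>b\<in>Bz. C i b * b $ j))"
        using C by (simp only: smult_sum_comp)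
      also have "\<dots> = (\<Sum>i\<in>UNIV. \<Sum>b\<in>Bz. b0 $ i * (C i b * b $ j))" by (simp only: sum_distrib_left)
      also have "\<dots> = (\<Sum>b\<in>Bz. \<Sum>i\<in>UNIV. b0 $ i * (C i b * b $ j))" by (rule sum.swap)
      also have "\<dots> = (\<Sum>b\<in>Bz. (\<Sum>i\<in>UNIV. b0 $ i * C i b) * b $ j)" by (simp only: sum_distrib_right mult.assoc)
      finally show ?thesis .
    qed
    have Y: "b0 $ j = (\<Sum>b\<in>Bz. (if b = b0 then 1 else 0) * b $ j)" for j
      using b0 fB by (simp only: sum_ind3) simp
    have Z: "(\<Sum>b\<in>Bz. ((\<Sum>i\<in>UNIV. b0 $ i * C i b) - (if b = b0 then 1 else 0)) * b $ j) = 0" for j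
    proof -
      have XY: "(\<Sum>b\<in>Bz. (\<Sum>i\<in>UNIV. b0 $ i * C i b) * b $ j) = (\<Sum>b\<in>Bz. (if b = b0 then 1 else 0) * b $ j)"
        by (rule trans[OF sym[OF X] Y])
      have "(\<Sum>b\<in>Bz. ((\<Sum>i\<in>UNIV. b0 $ i * C i b) - (if b = b0 then 1 else 0)) * b $ j) =
        (\<Sum>b\<in>Bz. (\<Sum>i\<in>UNIV. b0 $ i * C i b) * b $ j) - (\<Sum>b\<in>Bz. (if b = b0 then 1 else 0) * b $ j)"
        by (simp only: left_diff_distrib sum_subtractf)
      then show ?thesis by (simp only: XY diff_self)
    qed
    have "(\<Sum>b\<in>Bz. ((\<Sum>i\<in>UNIV. b0 $ i * C i b) - (if b = b0 then 1 else 0)) *s b) = 0"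
    proof (rule iffD2[OF vec_eq_iff], rule allI)
      fix j show "(\<Sum>b\<in>Bz. ((\<Sum>i\<in>UNIV. b0 $ i * C i b) - (if b = b0 then 1 else 0)) *s b) $ j = 0 $ j"
        using Z[of j] by (simp only: smult_sum_comp zero_index)
    qed
    then have "(\<Sum>i\<in>UNIV. b0 $ i * C i b) - (if b = b0 then 1 else 0) = 0"
      by (rule uniq[OF _ b])
    then show ?thesis by simp
  qed
  show ?thesis unfolding li_def
  proof (intro conjI allI impI ballI)
    show "finite Bz" by fact
    fix r b0 assume h: "(\<Sum>b\<in>Bz. r b *\<^sub>R emb b) = 0" and b0: "b0 \<in> Bz"
    have comp: "(\<Sum>b\<in>Bz. r b * real_of_int (b $ i)) = 0" for i
      using arg_cong[OF h, of "\<lambda>x. x $ i"] by (simp add: emb_def)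
    have "r b0 = (\<Sum>b\<in>Bz. r b * (if b0 = b then 1 else 0))"
      using b0 fB by (simp add: sum_ind1)
    also have "\<dots> = (\<Sum>b\<in>Bz. r b * real_of_int (\<Sum>i\<in>UNIV. b $ i * C i b0))"
      by (rule sum.cong) (use delta b0 in auto)
    also have "\<dots> = (\<Sum>b\<in>Bz. \<Sum>i\<in>UNIV. real_of_int (C i b0) * (r b * real_of_int (b $ i)))"
      by (simp only: of_int_sum of_int_mult sum_distrib_left mult.commute mult.left_commute)
    also have "\<dots> = (\<Sum>i\<in>UNIV. \<Sum>b\<in>Bz. real_of_int (C i b0) * (r b * real_of_int (b $ i)))" by (rule sum.swap)
    also have "\<dots> = (\<Sum>i\<in>UNIV. real_of_int (C i b0) * (\<Sum>b\<in>Bz. r b * real_of_int (b $ i)))"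
      by (simp only: sum_distrib_left)
    also have "\<dots> = 0" using comp by simp
    finally show "r b0 = 0" .
  qed
qed

lemma zbasis_span: "zbasis Bz \<Longrightarrow> \<exists>c. w = (\<Sum>b\<in>Bz. c b *s b)"
proof -
  assume "zbasis Bz"
  then have "\<forall>w. \<exists>c. w = (\<Sum>b\<in>Bz. c b *s b)" unfolding zbasis_def by (elim conjE)
  then show ?thesis by blast
qed

lemma zbasis_uniq: "zbasis Bz \<Longrightarrow> (\<Sum>b\<in>Bz. c b *s b) = 0 \<Longrightarrow> b \<in> Bz \<Longrightarrow> c b = 0"
proof -
  assume "zbasis Bz" "(\<Sum>b\<in>Bz. c b *s b) = 0" "b \<in> Bz"
  moreover have "\<forall>c. (\<Sum>b\<in>Bz. c b *s b) = 0 \<longrightarrow> (\<forall>b\<in>Bz. c b = 0)" using \<open>zbasis Bz\<close> unfolding zbasis_def by (elim conjE)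
  ultimately show ?thesis by blast
qed

lemma zbasis_prim:
  assumes z: "zbasis Bz" and b: "b \<in> Bz"
  shows "primitive b"
  unfolding primitive_def
proof (intro conjI allI impI)
  show "b \<noteq> 0" using li_nonzero[OF zbasis_li[OF z] b] .
  fix w k assume h: "b = k *s w"
  have fB: "finite Bz" using z zbasis_def by blast
  obtain c where c: "w = (\<Sum>b\<in>Bz. c b *s b)" using zbasis_span[OF z] by blast
  have "(\<Sum>b'\<in>Bz. (k * c b' - (if b' = b then 1 else 0)) *s b') = 0"
  proof -
    have "(\<Sum>b'\<in>Bz. (k * c b' - (if b' = b then 1 else 0)) * b' $ j) = 0" for j
    proof -
      have "b $ j = k * (\<Sum>b'\<in>Bz. c b' * b' $ j)" using h c by (simp only: vector_smult_component smult_sum_comp)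
      moreover have "b $ j = (\<Sum>b'\<in>Bz. (if b' = b then 1 else 0) * b' $ j)" using b fB by (simp add: sum_ind3)
      ultimately show ?thesis by (simp add: left_diff_distrib sum_subtractf sum_distrib_left mult.assoc)
    qed
    then show ?thesis by (intro iffD2[OF vec_eq_iff] allI) (simp only: smult_sum_comp zero_index)
  qed
  then have "k * c b - (if b = b then 1 else 0) = 0" by (rule zbasis_uniq[OF z _ b])
  then have "k * c b = 1" by simp
  then have "k dvd 1" by (metis dvd_triv_left)
  then have "\<bar>k\<bar> = 1" by (simp add: zdvd1_eq)
  then show "k = 1 \<or> k = -1" by arith
qed

lemma finite_bounded_vecs: "finite {u :: int ^ 'n::finite. \<forall>i. \<bar>u $ i\<bar> \<le> K i}"
proof -
  let ?A = "{u :: int ^ 'n. \<forall>i. \<bar>u $ i\<bar> \<le> K i}"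
  have "(\<lambda>u i. u $ i) ` ?A \<subseteq> PiE UNIV (\<lambda>i. {- K i..K i})"
  proof
    fix f assume "f \<in> (\<lambda>u i. u $ i) ` ?A"
    then obtain u where u: "u \<in> ?A" "f = (\<lambda>i. u $ i)" by blast
    have "- K i \<le> u $ i \<and> u $ i \<le> K i" for i
    proof -
      have "\<bar>u $ i\<bar> \<le> K i" using u(1) by blast
      then show ?thesis by arith
    qed
    then show "f \<in> PiE UNIV (\<lambda>i. {- K i..K i})" using u(2) by (auto simp: PiE_def extensional_def)
  qed
  moreover have "finite (PiE UNIV (\<lambda>i. {- K i..K i}))" by (intro finite_PiE) auto
  ultimately have "finite ((\<lambda>u i. u $ i) ` ?A)" using finite_subset by blast
  moreover have "inj_on (\<lambda>u i. u $ i) ?A" by (auto simp: inj_on_def vec_eq_iff fun_eq_iff)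
  ultimately show ?thesis using finite_imageD by blast
qed

context sfan begin

lemma box_zero: "box_pts \<Delta> {0} = {0}"
  unfolding box_pts_def using zero_in(2) by (auto simp: emb_eq0)

lemma box_fin:
  assumes t: "\<tau> \<in> \<Delta>" shows "finite (box_pts \<Delta> \<tau>)"
proof -
  define K where "K = (\<lambda>i. \<Sum>v\<in>g \<tau>. \<bar>v $ i\<bar>)"
  have "box_pts \<Delta> \<tau> \<subseteq> {u. \<forall>i. \<bar>u $ i\<bar> \<le> K i}"
  proof (safe)
    fix u i assume "u \<in> box_pts \<Delta> \<tau>"
    then obtain a where a: "\<forall>v\<in>g \<tau>. 0 < a v \<and> a v < 1" "emb u = (\<Sum>v\<in>g \<tau>. a v *\<^sub>R emb v)"
      unfolding box_pts_def by blast
    have "real_of_int (u $ i) = (\<Sum>v\<in>g \<tau>. a v * real_of_int (v $ i))"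
      using arg_cong[OF a(2), of "\<lambda>x. x $ i"] by (simp add: emb_def)
    then have "\<bar>real_of_int (u $ i)\<bar> \<le> (\<Sum>v\<in>g \<tau>. \<bar>a v * real_of_int (v $ i)\<bar>)"
      by (simp add: sum_abs)
    also have "\<dots> \<le> (\<Sum>v\<in>g \<tau>. real_of_int \<bar>v $ i\<bar>)"
    proof (rule sum_mono)
      fix v assume "v \<in> g \<tau>"
      then have "\<bar>a v\<bar> \<le> 1" using a(1) by auto
      then have "\<bar>a v\<bar> * \<bar>real_of_int (v $ i)\<bar> \<le> 1 * \<bar>real_of_int (v $ i)\<bar>"
        by (intro mult_right_mono) auto
      then show "\<bar>a v * real_of_int (v $ i)\<bar> \<le> real_of_int \<bar>v $ i\<bar>" by (simp add: abs_mult)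
    qed
    also have "\<dots> = real_of_int (K i)" by (simp add: K_def)
    finally show "\<bar>u $ i\<bar> \<le> K i" by linarith
  qed
  then show ?thesis using finite_bounded_vecs finite_subset by blast
qed

lemma box_unimod:
  assumes t: "\<tau> \<in> \<Delta>" and u: "unimodular \<tau>" and nz: "\<tau> \<noteq> {0}"
  shows "box_pts \<Delta> \<tau> = {}"
proof -
  obtain S Bz where S: "S \<subseteq> Bz" "zbasis Bz" "\<tau> = cone_gen (emb ` S)"
    using u unfolding unimodular_def by blast
  have liB: "li Bz" using zbasis_li[OF S(2)] .
  have liS: "li S" using li_subset[OF liB S(1)] .
  have fB: "finite Bz" using li_finite[OF liB] .
  have prS: "\<forall>p\<in>S. primitive p" using zbasis_prim[OF S(2)] S(1) by blast
  have tS: "\<tau> = cg S" using S(3) cone_gen_emb by simp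
  have gS: "g \<tau> = S" using gens_char[OF t liS prS tS] .
  have Sne: "S \<noteq> {}" using nz tS cg_empty by auto
  show ?thesis
  proof (rule ccontr)
    assume "box_pts \<Delta> \<tau> \<noteq> {}"
    then obtain u a where a: "\<forall>v\<in>S. 0 < a v \<and> a v < 1" "emb u = (\<Sum>v\<in>S. a v *\<^sub>R emb v)"
      unfolding box_pts_def gS by blast
    obtain c where c: "u = (\<Sum>b\<in>Bz. c b *s b)" using zbasis_span[OF S(2)] by blast
    have e1: "emb u = (\<Sum>b\<in>Bz. real_of_int (c b) *\<^sub>R emb b)"
      using c by (simp add: emb_sum emb_smult)
    have e2: "emb u = (\<Sum>b\<in>Bz. (if b \<in> S then a b else 0) *\<^sub>R emb b)"
      using a(2) sum_extend_R[OF fB S(1), of a emb] by simp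
    obtain s where s: "s \<in> S" using Sne by blast
    have "real_of_int (c s) = (if s \<in> S then a s else 0)"
      using li_unique[OF liB trans[OF e1[symmetric] e2]] s S(1) by blast
    then have "0 < real_of_int (c s)" "real_of_int (c s) < 1" using a(1) s by auto
    then have "0 < c s" "c s < 1" by simp_all
    then show False by linarith
  qed
qed

lemma zero_not_sing: "{0} \<notin> sing \<Delta>"
  unfolding sing_def using unimodular_zero by blast

end

definition smem :: "(int ^ 'n::finite) set \<Rightarrow> int ^ 'n \<Rightarrow> bool" where
  "smem T y \<longleftrightarrow> (\<exists>n::int ^ 'n \<Rightarrow> nat. y = (\<Sum>v\<in>T. int (n v) *s v))"

definition Sg :: "(int ^ 'n::finite) set \<Rightarrow> int ^ 'n \<Rightarrow> int" where
  "Sg T y = (if smem T y then 1 else 0)"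

lemma emb_comb: "emb (\<Sum>v\<in>T. k v *s v) = (\<Sum>v\<in>T. real_of_int (k v) *\<^sub>R emb v)"
  by (simp add: emb_sum emb_smult)

lemma comb_unique:
  assumes li: "li T" and eq: "(\<Sum>v\<in>T. k v *s v) = (\<Sum>v\<in>T. l v *s v)" and v: "v \<in> T"
  shows "k v = l v"
proof -
  have "(\<Sum>v\<in>T. real_of_int (k v) *\<^sub>R emb v) = (\<Sum>v\<in>T. real_of_int (l v) *\<^sub>R emb v)"
    using arg_cong[OF eq, of emb] by (simp only: emb_comb)
  then have "real_of_int (k v) = real_of_int (l v)" by (rule li_unique[OF li _ v])
  then show ?thesis by simp
qed

lemma split_upd:
  assumes fT: "finite T" and aT: "a \<notin> T"
  shows "(\<Sum>v\<in>insert a T. int ((n(a := k)) v) *s v) = int k *s a + (\<Sum>v\<in>T. int (n v) *s v)"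
proof -
  have "(\<Sum>v\<in>insert a T. int ((n(a := k)) v) *s v) = int ((n(a := k)) a) *s a + (\<Sum>v\<in>T. int ((n(a := k)) v) *s v)"
    using fT aT by (rule sum.insert)
  also have "(\<Sum>v\<in>T. int ((n(a := k)) v) *s v) = (\<Sum>v\<in>T. int (n v) *s v)"
    using aT by (intro sum.cong) auto
  finally show ?thesis by simp
qed

lemma split_ins:
  assumes fT: "finite T" and aT: "a \<notin> T"
  shows "(\<Sum>v\<in>insert a T. int (n v) *s v) = int (n a) *s a + (\<Sum>v\<in>T. int (n v) *s v)"
  using fT aT by (rule sum.insert)

lemma Sg_step:
  assumes li: "li (insert a T)" and aT: "a \<notin> T"
  shows "Sg (insert a T) w - Sg (insert a T) (w - a) = Sg T w"
proof -
  have fT: "finite T" using li_finite[OF li] by simp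
  let ?A = "insert a T"
  note su = split_upd[OF fT aT] and si = split_ins[OF fT aT]
  have memA_of_T: "smem ?A y" if "smem T y" for y
  proof -
    from that obtain n where n: "y = (\<Sum>v\<in>T. int (n v) *s v)" unfolding smem_def by blast
    have "(\<Sum>v\<in>?A. int ((n(a := 0)) v) *s v) = y" unfolding su n by simp
    then show ?thesis unfolding smem_def by metis
  qed
  have shiftA: "smem ?A y" if "smem ?A (y - a)" for y
  proof -
    from that obtain n where n: "y - a = (\<Sum>v\<in>?A. int (n v) *s v)" unfolding smem_def by blast
    have "(\<Sum>v\<in>?A. int ((n(a := n a + 1)) v) *s v) = int (n a + 1) *s a + (\<Sum>v\<in>T. int (n v) *s v)"
      by (rule su)
    also have "\<dots> = a + (int (n a) *s a + (\<Sum>v\<in>T. int (n v) *s v))" by (simp add: vector_sadd_rdistrib)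
    also have "\<dots> = y" unfolding si[symmetric] n[symmetric] by simp
    finally show ?thesis unfolding smem_def by metis
  qed
  show ?thesis
  proof (cases "smem T w")
    case True
    then obtain n where n: "w = (\<Sum>v\<in>T. int (n v) *s v)" unfolding smem_def by blast
    have "\<not> smem ?A (w - a)"
    proof
      assume "smem ?A (w - a)"
      then obtain m where m: "w - a = (\<Sum>v\<in>?A. int (m v) *s v)" unfolding smem_def by blast
      have e1: "(\<Sum>v\<in>?A. int ((m(a := m a + 1)) v) *s v) = w"
      proof -
        have "(\<Sum>v\<in>?A. int ((m(a := m a + 1)) v) *s v) = int (m a + 1) *s a + (\<Sum>v\<in>T. int (m v) *s v)"
          by (rule su)
        also have "\<dots> = a + (int (m a) *s a + (\<Sum>v\<in>T. int (m v) *s v))" by (simp add: vector_sadd_rdistrib)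
        also have "\<dots> = w" unfolding si[symmetric] m[symmetric] by simp
        finally show ?thesis .
      qed
      have e2: "(\<Sum>v\<in>?A. int ((n(a := 0)) v) *s v) = w" unfolding su n by simp
      have "int ((m(a := m a + 1)) a) = int ((n(a := 0)) a)"
        by (rule comb_unique[OF li trans[OF e1 e2[symmetric]]]) simp
      then show False by simp
    qed
    then show ?thesis using True memA_of_T by (simp add: Sg_def)
  next
    case False
    show ?thesis
    proof (cases "smem ?A w")
      case True
      then obtain n where n: "w = (\<Sum>v\<in>?A. int (n v) *s v)" unfolding smem_def by blast
      have na: "n a \<noteq> 0"
      proof
        assume "n a = 0"
        then have "w = (\<Sum>v\<in>T. int (n v) *s v)" using n unfolding si by simp
        then show False using False unfolding smem_def by blast
      qed
      have "(\<Sum>v\<in>?A. int ((n(a := n a - 1)) v) *s v) = int (n a - 1) *s a + (\<Sum>v\<in>T. int (n v) *s v)"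
        by (rule su)
      also have "\<dots> = (int (n a) *s a + (\<Sum>v\<in>T. int (n v) *s v)) - a"
      proof -
        have "int (n a - 1) = int (n a) - 1" using na by simp
        then have "int (n a - 1) *s a = int (n a) *s a - a" by (simp add: vec_eq_iff algebra_simps)
        then show ?thesis by simp
      qed
      also have "\<dots> = w - a" unfolding si[symmetric] n[symmetric] by simp
      finally have "smem ?A (w - a)" unfolding smem_def by metis
      then show ?thesis using True False by (simp add: Sg_def)
    next
      case False2: False
      then have "\<not> smem ?A (w - a)" using shiftA by blast
      then show ?thesis using False False2 by (simp add: Sg_def)
    qed
  qed
qed

lemma ms_step:
  assumes "li (insert a T)" "a \<notin> T"
  shows "mul_series (1 - xmon a) (Sg (insert a T)) = Sg T"
proof
  fix w
  show "mul_series (1 - xmon a) (Sg (insert a T)) w = Sg T w"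
    using Sg_step[OF assms, of w] by (simp add: ms_diff ms_one ms_xmon)
qed

lemma Sg_empty: "Sg {} = Poly_Mapping.lookup 1"
  by (auto simp: fun_eq_iff Sg_def smem_def lookup_one when_def)

lemma K_lemma:
  assumes "li T"
  shows "mul_series (\<Prod>v\<in>T. 1 - xmon v) (Sg T) = Poly_Mapping.lookup 1"
proof -
  have "finite T" using li_finite[OF assms] .
  then show ?thesis using assms
  proof (induction T rule: finite_induct)
    case empty
    then show ?case by (simp add: ms_one Sg_empty)
  next
    case (insert a T)
    have liT: "li T" using li_subset[OF insert.prems] by blast
    have "mul_series (\<Prod>v\<in>insert a T. 1 - xmon v) (Sg (insert a T)) =
          mul_series ((\<Prod>v\<in>T. 1 - xmon v) * (1 - xmon a)) (Sg (insert a T))"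
      using insert.hyps by (simp add: mult.commute)
    also have "\<dots> = mul_series (\<Prod>v\<in>T. 1 - xmon v) (Sg T)"
      by (simp only: ms_mult ms_step[OF insert.prems insert.hyps(2)])
    also have "\<dots> = Poly_Mapping.lookup 1" using insert.IH[OF liT] .
    finally show ?case .
  qed
qed

context sfan begin

definition Pw :: "int ^ 'n \<Rightarrow> (real ^ 'n) set \<Rightarrow> (real ^ 'n) set \<Rightarrow> int ^ 'n \<Rightarrow> bool" where
  "Pw w \<tau> \<rho> u \<longleftrightarrow> smem (g \<rho>) (w - u - (\<Sum>v\<in>g \<rho> - g \<tau>. v))"

lemma floor_char: "0 \<le> x \<Longrightarrow> x < 1 \<Longrightarrow> \<lfloor>x + real k\<rfloor> = int k"
  by (simp add: floor_eq_iff)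

lemma out:
  assumes t: "\<tau> \<in> \<Delta>" and r: "\<rho> \<in> \<Delta>" and sub: "g \<tau> \<subseteq> g \<rho>" and u: "u \<in> box_pts \<Delta> \<tau>"
    and P: "Pw w \<tau> \<rho> u"
  shows "\<exists>c. (\<forall>v\<in>g \<rho>. 0 < c v) \<and> emb w = (\<Sum>v\<in>g \<rho>. c v *\<^sub>R emb v) \<and>
             g \<tau> = {v\<in>g \<rho>. real_of_int \<lfloor>c v\<rfloor> \<noteq> c v} \<and> u = w - (\<Sum>v\<in>g \<rho>. \<lfloor>c v\<rfloor> *s v)"
proof -
  let ?D = "g \<rho> - g \<tau>"
  have fr: "finite (g \<rho>)" using g_fin[OF r] .
  obtain a where a: "\<forall>v\<in>g \<tau>. 0 < a v \<and> a v < 1" "emb u = (\<Sum>v\<in>g \<tau>. a v *\<^sub>R emb v)"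
    using u unfolding box_pts_def by blast
  obtain n where n: "w - u - (\<Sum>v\<in>?D. v) = (\<Sum>v\<in>g \<rho>. int (n v) *s v)"
    using P unfolding Pw_def smem_def by blast
  define c where "c = (\<lambda>v. (if v \<in> g \<tau> then a v else 1) + real (n v))"
  have wu: "w = u + (\<Sum>v\<in>?D. v) + (\<Sum>v\<in>g \<rho>. int (n v) *s v)" using n by (simp add: algebra_simps)
  have split: "(\<Sum>v\<in>g \<rho>. f v) = (\<Sum>v\<in>?D. f v) + (\<Sum>v\<in>g \<tau>. f v)" for f :: "_ \<Rightarrow> 'z::comm_monoid_add"
    by (rule sum.subset_diff[OF sub fr])
  have "(\<Sum>v\<in>g \<rho>. c v *\<^sub>R emb v) = (\<Sum>v\<in>g \<rho>. (if v \<in> g \<tau> then a v else 1) *\<^sub>R emb v) + (\<Sum>v\<in>g \<rho>. real (n v) *\<^sub>R emb v)"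
    unfolding c_def by (simp only: scaleR_add_left sum.distrib)
  also have "(\<Sum>v\<in>g \<rho>. (if v \<in> g \<tau> then a v else 1) *\<^sub>R emb v) = (\<Sum>v\<in>?D. emb v) + (\<Sum>v\<in>g \<tau>. a v *\<^sub>R emb v)"
    unfolding split by (intro arg_cong2[where f="(+)"] sum.cong) auto
  finally have cs: "(\<Sum>v\<in>g \<rho>. c v *\<^sub>R emb v) = (\<Sum>v\<in>?D. emb v) + (\<Sum>v\<in>g \<tau>. a v *\<^sub>R emb v) + (\<Sum>v\<in>g \<rho>. real (n v) *\<^sub>R emb v)" .
  have ew: "emb w = emb u + (\<Sum>v\<in>?D. emb v) + (\<Sum>v\<in>g \<rho>. real (n v) *\<^sub>R emb v)"
    by (subst wu) (simp add: emb_add emb_sum emb_smult)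
  have "(\<Sum>v\<in>g \<rho>. c v *\<^sub>R emb v) = emb w"
    unfolding cs ew a(2) by (simp add: algebra_simps)
  moreover have "\<forall>v\<in>g \<rho>. 0 < c v" unfolding c_def using a(1) by (auto intro: add_pos_nonneg)
  moreover have fl: "\<lfloor>c v\<rfloor> = int (n v) + (if v \<in> g \<tau> then 0 else 1)" if "v \<in> g \<rho>" for v
  proof (cases "v \<in> g \<tau>")
    case True
    then have "\<lfloor>c v\<rfloor> = int (n v)" unfolding c_def using a(1) floor_char[of "a v" "n v"] by auto
    then show ?thesis using True by simp
  next
    case False
    then have "c v = real_of_int (int (n v) + 1)" unfolding c_def by simp
    then show ?thesis using False by (simp only: floor_of_int) simp
  qed
  moreover have "g \<tau> = {v\<in>g \<rho>. real_of_int \<lfloor>c v\<rfloor> \<noteq> c v}"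
  proof (intro set_eqI iffI)
    fix v assume v: "v \<in> g \<tau>"
    have X: "real_of_int \<lfloor>c v\<rfloor> = real (n v)" using fl[of v] sub v by auto
    have Y: "c v = a v + real (n v)" using v unfolding c_def by simp
    have "0 < a v" using a(1) v by blast
    then have "real_of_int \<lfloor>c v\<rfloor> \<noteq> c v" using X Y by linarith
    then show "v \<in> {v\<in>g \<rho>. real_of_int \<lfloor>c v\<rfloor> \<noteq> c v}" using v sub by blast
  next
    fix v assume v: "v \<in> {v\<in>g \<rho>. real_of_int \<lfloor>c v\<rfloor> \<noteq> c v}"
    show "v \<in> g \<tau>"
    proof (rule ccontr)
      assume nv: "v \<notin> g \<tau>"
      have X: "real_of_int \<lfloor>c v\<rfloor> = real (n v) + 1" using fl[of v] v nv by auto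
      have Y: "c v = 1 + real (n v)" using nv unfolding c_def by simp
      have "real_of_int \<lfloor>c v\<rfloor> \<noteq> c v" using v by blast
      then show False using X Y by linarith
    qed
  qed
  moreover have "u = w - (\<Sum>v\<in>g \<rho>. \<lfloor>c v\<rfloor> *s v)"
  proof -
    have "(\<Sum>v\<in>g \<rho>. \<lfloor>c v\<rfloor> *s v) = (\<Sum>v\<in>g \<rho>. int (n v) *s v + (if v \<in> g \<tau> then 0 else v))"
      by (rule sum.cong) (auto simp: fl vector_sadd_rdistrib)
    also have "\<dots> = (\<Sum>v\<in>g \<rho>. int (n v) *s v) + (\<Sum>v\<in>g \<rho>. (if v \<in> g \<tau> then 0 else v))"
      by (rule sum.distrib)
    also have "(\<Sum>v\<in>g \<rho>. (if v \<in> g \<tau> then 0 else v)) = (\<Sum>v\<in>?D. v)"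
      unfolding split by (simp add: sum.neutral)
    finally show ?thesis using wu by (simp add: algebra_simps)
  qed
  ultimately show ?thesis by (intro exI[of _ c]) (simp only: conj_assoc)
qed

lemma trip_unique:
  assumes t1: "\<tau>1 \<in> \<Delta>" and r1: "\<rho>1 \<in> \<Delta>" and s1: "g \<tau>1 \<subseteq> g \<rho>1" and u1: "u1 \<in> box_pts \<Delta> \<tau>1" and P1: "Pw w \<tau>1 \<rho>1 u1"
    and t2: "\<tau>2 \<in> \<Delta>" and r2: "\<rho>2 \<in> \<Delta>" and s2: "g \<tau>2 \<subseteq> g \<rho>2" and u2: "u2 \<in> box_pts \<Delta> \<tau>2" and P2: "Pw w \<tau>2 \<rho>2 u2"
  shows "\<tau>1 = \<tau>2 \<and> \<rho>1 = \<rho>2 \<and> u1 = u2"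
proof -
  obtain c1 where c1: "\<forall>v\<in>g \<rho>1. 0 < c1 v" "emb w = (\<Sum>v\<in>g \<rho>1. c1 v *\<^sub>R emb v)"
      "g \<tau>1 = {v\<in>g \<rho>1. real_of_int \<lfloor>c1 v\<rfloor> \<noteq> c1 v}" "u1 = w - (\<Sum>v\<in>g \<rho>1. \<lfloor>c1 v\<rfloor> *s v)"
    using out[OF t1 r1 s1 u1 P1] by blast
  obtain c2 where c2: "\<forall>v\<in>g \<rho>2. 0 < c2 v" "emb w = (\<Sum>v\<in>g \<rho>2. c2 v *\<^sub>R emb v)"
      "g \<tau>2 = {v\<in>g \<rho>2. real_of_int \<lfloor>c2 v\<rfloor> \<noteq> c2 v}" "u2 = w - (\<Sum>v\<in>g \<rho>2. \<lfloor>c2 v\<rfloor> *s v)"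
    using out[OF t2 r2 s2 u2 P2] by blast
  have rr: "\<rho>1 = \<rho>2" using relint_unique[OF r1 r2 c1(1) c2(1) trans[OF c1(2)[symmetric] c2(2)]] .
  have eqs: "(\<Sum>v\<in>g \<rho>1. c1 v *\<^sub>R emb v) = (\<Sum>v\<in>g \<rho>1. c2 v *\<^sub>R emb v)"
    using c1(2) c2(2) rr by simp
  have cc: "c1 v = c2 v" if "v \<in> g \<rho>1" for v using li_unique[OF g_li[OF r1] eqs that] .
  have "g \<tau>1 = g \<tau>2" unfolding c1(3) c2(3) rr[symmetric] using cc by auto
  then have tt: "\<tau>1 = \<tau>2" using g_inj[OF t1 t2] by blast
  have "u1 = u2" unfolding c1(4) c2(4) rr[symmetric] using cc by (simp cong: sum.cong)
  then show ?thesis using tt rr by blast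
qed

lemma trip_in:
  assumes t: "\<tau> \<in> \<Delta>" and r: "\<rho> \<in> \<Delta>" and s: "g \<tau> \<subseteq> g \<rho>" and u: "u \<in> box_pts \<Delta> \<tau>" and P: "Pw w \<tau> \<rho> u"
  shows "emb w \<in> \<sigma>"
proof -
  obtain c where c: "\<forall>v\<in>g \<rho>. 0 < c v" "emb w = (\<Sum>v\<in>g \<rho>. c v *\<^sub>R emb v)"
    using out[OF t r s u P] by blast
  have "emb w \<in> \<rho>" unfolding c(2) by (rule comb_mem'[OF r c(1)])
  then show ?thesis using r unionD by blast
qed

lemma trip_exists:
  assumes w: "emb w \<in> \<sigma>"
  shows "\<exists>\<tau> \<rho> u. \<tau> \<in> \<Delta> \<and> \<rho> \<in> \<Delta> \<and> g \<tau> \<subseteq> g \<rho> \<and> u \<in> box_pts \<Delta> \<tau> \<and> Pw w \<tau> \<rho> u"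
proof -
  obtain \<rho> c where r: "\<rho> \<in> \<Delta>" and c: "\<forall>v\<in>g \<rho>. 0 < c v" "emb w = (\<Sum>v\<in>g \<rho>. c v *\<^sub>R emb v)"
    using relint_exists[OF w] by blast
  have fr: "finite (g \<rho>)" using g_fin[OF r] .
  define T where "T = {v\<in>g \<rho>. real_of_int \<lfloor>c v\<rfloor> \<noteq> c v}"
  have T: "T \<subseteq> g \<rho>" unfolding T_def by blast
  obtain \<tau> where t: "\<tau> \<in> \<Delta>" "g \<tau> = T" using sub_in[OF r T] by blast
  define u where "u = w - (\<Sum>v\<in>g \<rho>. \<lfloor>c v\<rfloor> *s v)"
  define n where "n = (\<lambda>v. nat (\<lfloor>c v\<rfloor> - (if v \<in> T then 0 else 1)))"
  have fl0: "0 \<le> \<lfloor>c v\<rfloor>" if "v \<in> g \<rho>" for v using c(1) that by (simp add: less_imp_le)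
  have fl1: "1 \<le> \<lfloor>c v\<rfloor>" if "v \<in> g \<rho>" "v \<notin> T" for v
  proof -
    have X: "real_of_int \<lfloor>c v\<rfloor> = c v" using that unfolding T_def by blast
    have "0 < c v" using c(1) that(1) by blast
    then have "0 < real_of_int \<lfloor>c v\<rfloor>" using X by linarith
    then have "0 < \<lfloor>c v\<rfloor>" by (simp only: of_int_0_less_iff)
    then show ?thesis by simp
  qed
  have nn: "int (n v) = \<lfloor>c v\<rfloor> - (if v \<in> T then 0 else 1)" if "v \<in> g \<rho>" for v
  proof (cases "v \<in> T")
    case True then show ?thesis unfolding n_def using fl0[OF that] by simp
  next
    case False
    have "1 \<le> \<lfloor>c v\<rfloor>" by (rule fl1[OF that False])
    then show ?thesis unfolding n_def using False by simp
  qed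
  have box: "u \<in> box_pts \<Delta> \<tau>"
    unfolding box_pts_def t(2)
  proof (intro CollectI exI[of _ "\<lambda>v. c v - real_of_int \<lfloor>c v\<rfloor>"] conjI ballI)
    fix v assume v: "v \<in> T"
    then have "real_of_int \<lfloor>c v\<rfloor> \<noteq> c v" unfolding T_def by blast
    then show "0 < c v - real_of_int \<lfloor>c v\<rfloor>" using of_int_floor_le[of "c v"] by linarith
    show "c v - real_of_int \<lfloor>c v\<rfloor> < 1" by linarith
  next
    have "emb u = (\<Sum>v\<in>g \<rho>. c v *\<^sub>R emb v) - (\<Sum>v\<in>g \<rho>. real_of_int \<lfloor>c v\<rfloor> *\<^sub>R emb v)"
      unfolding u_def by (simp add: emb_diff emb_sum emb_smult c(2))
    also have "\<dots> = (\<Sum>v\<in>g \<rho>. (c v - real_of_int \<lfloor>c v\<rfloor>) *\<^sub>R emb v)"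
      by (simp only: scaleR_diff_left sum_subtractf)
    also have "\<dots> = (\<Sum>v\<in>T. (c v - real_of_int \<lfloor>c v\<rfloor>) *\<^sub>R emb v)"
      by (rule sum_restrict[OF fr T]) (auto simp: T_def)
    finally show "emb u = (\<Sum>v\<in>T. (c v - real_of_int \<lfloor>c v\<rfloor>) *\<^sub>R emb v)" .
  qed
  have P: "Pw w \<tau> \<rho> u"
    unfolding Pw_def smem_def t(2)
  proof (intro exI[of _ n])
    have "(\<Sum>v\<in>g \<rho>. int (n v) *s v) = (\<Sum>v\<in>g \<rho>. \<lfloor>c v\<rfloor> *s v - (if v \<in> T then 0 else v))"
      by (rule sum.cong) (auto simp: nn vec_eq_iff algebra_simps)
    also have "\<dots> = (\<Sum>v\<in>g \<rho>. \<lfloor>c v\<rfloor> *s v) - (\<Sum>v\<in>g \<rho>. (if v \<in> T then 0 else v))"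
      by (rule sum_subtractf)
    also have "(\<Sum>v\<in>g \<rho>. (if v \<in> T then 0 else v)) = (\<Sum>v\<in>g \<rho> - T. v)"
      unfolding sum.subset_diff[OF T fr] by (simp add: sum.neutral)
    finally show "w - u - (\<Sum>v\<in>g \<rho> - T. v) = (\<Sum>v\<in>g \<rho>. int (n v) *s v)"
      unfolding u_def by (simp add: algebra_simps)
  qed
  have "g \<tau> \<subseteq> g \<rho>" using t(2) T by simp
  then show ?thesis using t(1) r box P by blast
qed

lemma DEC:
  "G \<sigma> w = (\<Sum>\<tau>\<in>\<Delta>. \<Sum>\<rho>\<in>{\<rho>\<in>\<Delta>. g \<tau> \<subseteq> g \<rho>}. \<Sum>u\<in>box_pts \<Delta> \<tau>. Sg (g \<rho>) (w - u - (\<Sum>v\<in>g \<rho> - g \<tau>. v)))"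
proof -
  have termeq: "Sg (g \<rho>) (w - u - (\<Sum>v\<in>g \<rho> - g \<tau>. v)) = (if Pw w \<tau> \<rho> u then 1 else 0)" for \<tau> \<rho> u
    unfolding Sg_def Pw_def by simp
  show ?thesis
  proof (cases "emb w \<in> \<sigma>")
    case False
    have "Sg (g \<rho>) (w - u - (\<Sum>v\<in>g \<rho> - g \<tau>. v)) = 0"
      if "\<tau> \<in> \<Delta>" "\<rho> \<in> {\<rho>\<in>\<Delta>. g \<tau> \<subseteq> g \<rho>}" "u \<in> box_pts \<Delta> \<tau>" for \<tau> \<rho> u
      using trip_in[of \<tau> \<rho> u w] that False unfolding termeq by auto
    then show ?thesis using False by (simp add: G_def)
  next
    case True
    obtain \<tau>0 \<rho>0 u0 where z: "\<tau>0 \<in> \<Delta>" "\<rho>0 \<in> \<Delta>" "g \<tau>0 \<subseteq> g \<rho>0" "u0 \<in> box_pts \<Delta> \<tau>0" "Pw w \<tau>0 \<rho>0 u0"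
      using trip_exists[OF True] by blast
    have inner: "(\<Sum>u\<in>box_pts \<Delta> \<tau>. Sg (g \<rho>) (w - u - (\<Sum>v\<in>g \<rho> - g \<tau>. v))) = (if \<tau> = \<tau>0 \<and> \<rho> = \<rho>0 then 1 else 0)"
      if t: "\<tau> \<in> \<Delta>" and r: "\<rho> \<in> {\<rho>\<in>\<Delta>. g \<tau> \<subseteq> g \<rho>}" for \<tau> \<rho>
    proof -
      have "(\<Sum>u\<in>box_pts \<Delta> \<tau>. Sg (g \<rho>) (w - u - (\<Sum>v\<in>g \<rho> - g \<tau>. v))) =
            (\<Sum>u\<in>box_pts \<Delta> \<tau>. if \<tau> = \<tau>0 \<and> \<rho> = \<rho>0 \<and> u = u0 then 1 else 0)"
      proof (rule sum.cong[OF refl])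
        fix u assume u: "u \<in> box_pts \<Delta> \<tau>"
        have "Pw w \<tau> \<rho> u \<longleftrightarrow> (\<tau> = \<tau>0 \<and> \<rho> = \<rho>0 \<and> u = u0)"
          using trip_unique[OF t _ _ u _ z] z(5) r by auto
        then show "Sg (g \<rho>) (w - u - (\<Sum>v\<in>g \<rho> - g \<tau>. v)) = (if \<tau> = \<tau>0 \<and> \<rho> = \<rho>0 \<and> u = u0 then 1 else 0)"
          unfolding termeq by simp
      qed
      also have "\<dots> = (if \<tau> = \<tau>0 \<and> \<rho> = \<rho>0 then 1 else 0)"
      proof (cases "\<tau> = \<tau>0 \<and> \<rho> = \<rho>0")
        case True
        then have "(\<Sum>u\<in>box_pts \<Delta> \<tau>. if \<tau> = \<tau>0 \<and> \<rho> = \<rho>0 \<and> u = u0 then 1 else (0::int)) = (\<Sum>u\<in>box_pts \<Delta> \<tau>. if u0 = u then 1 else 0)"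
          by (intro sum.cong) auto
        also have "\<dots> = 1" using box_fin[OF t] z(4) True by (simp add: sum.delta)
        finally show ?thesis using True by simp
      next
        case False
        then have "\<And>u. \<not> (\<tau> = \<tau>0 \<and> \<rho> = \<rho>0 \<and> u = u0)" by blast
        then have "(\<Sum>u\<in>box_pts \<Delta> \<tau>. if \<tau> = \<tau>0 \<and> \<rho> = \<rho>0 \<and> u = u0 then 1 else (0::int)) = 0"
          by (intro sum.neutral) auto
        then show ?thesis using False by simp
      qed
      finally show ?thesis .
    qed
    have mid: "(\<Sum>\<rho>\<in>{\<rho>\<in>\<Delta>. g \<tau> \<subseteq> g \<rho>}. \<Sum>u\<in>box_pts \<Delta> \<tau>. Sg (g \<rho>) (w - u - (\<Sum>v\<in>g \<rho> - g \<tau>. v))) = (if \<tau> = \<tau>0 then 1 else 0)"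
      if t: "\<tau> \<in> \<Delta>" for \<tau>
    proof -
      have "(\<Sum>\<rho>\<in>{\<rho>\<in>\<Delta>. g \<tau> \<subseteq> g \<rho>}. \<Sum>u\<in>box_pts \<Delta> \<tau>. Sg (g \<rho>) (w - u - (\<Sum>v\<in>g \<rho> - g \<tau>. v))) =
            (\<Sum>\<rho>\<in>{\<rho>\<in>\<Delta>. g \<tau> \<subseteq> g \<rho>}. if \<tau> = \<tau>0 \<and> \<rho> = \<rho>0 then 1 else 0)"
        by (rule sum.cong[OF refl]) (rule inner[OF t])
      also have "\<dots> = (if \<tau> = \<tau>0 then 1 else 0)"
        using finD z(2,3) by (auto simp: sum.delta')
      finally show ?thesis .
    qed
    have "(\<Sum>\<tau>\<in>\<Delta>. \<Sum>\<rho>\<in>{\<rho>\<in>\<Delta>. g \<tau> \<subseteq> g \<rho>}. \<Sum>u\<in>box_pts \<Delta> \<tau>. Sg (g \<rho>) (w - u - (\<Sum>v\<in>g \<rho> - g \<tau>. v))) =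
          (\<Sum>\<tau>\<in>\<Delta>. if \<tau> = \<tau>0 then 1 else 0)"
      by (rule sum.cong[OF refl]) (rule mid)
    also have "\<dots> = 1" using finD z(1) by (simp add: sum.delta')
    finally show ?thesis using True by (simp add: G_def)
  qed
qed

end

context sfan begin

abbreviation RR where "RR \<equiv> ray_gens \<Delta>"

definition Qp :: "(real ^ 'n) set \<Rightarrow> 'n lpoly" where
  "Qp \<rho> = (\<Prod>v\<in>RR - g \<rho>. 1 - xmon v)"

lemma lk_sum:
  assumes t: "\<tau> \<in> \<Delta>"
  shows "(\<Sum>\<rho>\<in>{\<rho>\<in>\<Delta>. g \<tau> \<subseteq> g \<rho>}. (\<Prod>v\<in>g \<rho> - g \<tau>. xmon v) * Qp \<rho>) =
         H_lk \<Delta> \<tau> * (\<Prod>v\<in>RR - star_gens \<Delta> \<tau>. 1 - xmon v)"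
proof -
  let ?L = "lk_gens \<Delta> \<tau>"
  have fR: "finite RR" by (rule R_fin)
  have LR: "?L \<subseteq> RR" by (rule lkg_R)
  have disj: "g \<tau> \<inter> ?L = {}" by (rule lkg_disj[OF t])
  have st: "star_gens \<Delta> \<tau> = g \<tau> \<union> ?L" by (rule star_eq[OF t])
  have "H_lk \<Delta> \<tau> * (\<Prod>v\<in>RR - star_gens \<Delta> \<tau>. 1 - xmon v) =
        (\<Sum>\<gamma>\<in>lk \<Delta> \<tau>. (\<Prod>v\<in>g \<gamma>. xmon v) * ((\<Prod>v\<in>?L - g \<gamma>. 1 - xmon v) * (\<Prod>v\<in>RR - star_gens \<Delta> \<tau>. 1 - xmon v)))"
    unfolding H_lk_def by (simp add: sum_distrib_right mult.assoc)
  also have "\<dots> = (\<Sum>\<gamma>\<in>lk \<Delta> \<tau>. (\<Prod>v\<in>g \<gamma>. xmon v) * (\<Prod>v\<in>RR - (g \<tau> \<union> g \<gamma>). 1 - xmon v))"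
  proof (rule sum.cong[OF refl])
    fix \<gamma> assume gm: "\<gamma> \<in> lk \<Delta> \<tau>"
    have gL: "g \<gamma> \<subseteq> ?L" using gm unfolding lk_gens_def by blast
    have fL: "finite ?L" using LR fR finite_subset by blast
    have eqset: "RR - (g \<tau> \<union> g \<gamma>) = (?L - g \<gamma>) \<union> (RR - star_gens \<Delta> \<tau>)"
      using LR disj gL st by blast
    have dj: "(?L - g \<gamma>) \<inter> (RR - star_gens \<Delta> \<tau>) = {}" using st by blast
    have "(\<Prod>v\<in>RR - (g \<tau> \<union> g \<gamma>). 1 - xmon v) = (\<Prod>v\<in>?L - g \<gamma>. 1 - xmon v) * (\<Prod>v\<in>RR - star_gens \<Delta> \<tau>. 1 - xmon v)"
      unfolding eqset by (rule prod.union_disjoint) (use fL fR dj in auto)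
    then show "(\<Prod>v\<in>g \<gamma>. xmon v) * ((\<Prod>v\<in>?L - g \<gamma>. 1 - xmon v) * (\<Prod>v\<in>RR - star_gens \<Delta> \<tau>. 1 - xmon v)) =
               (\<Prod>v\<in>g \<gamma>. xmon v) * (\<Prod>v\<in>RR - (g \<tau> \<union> g \<gamma>). 1 - xmon v)" by simp
  qed
  also have "\<dots> = (\<Sum>\<gamma>\<in>lk \<Delta> \<tau>. (\<Prod>v\<in>g (M \<gamma> \<tau>) - g \<tau>. xmon v) * Qp (M \<gamma> \<tau>))"
  proof (rule sum.cong[OF refl])
    fix \<gamma> assume gm: "\<gamma> \<in> lk \<Delta> \<tau>"
    have e: "g (M \<gamma> \<tau>) = g \<gamma> \<union> g \<tau>" by (rule lk_props(4)[OF t gm])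
    have d: "g \<gamma> \<inter> g \<tau> = {}" by (rule lk_props(2)[OF t gm])
    have "g (M \<gamma> \<tau>) - g \<tau> = g \<gamma>" using e d by blast
    moreover have "RR - g (M \<gamma> \<tau>) = RR - (g \<tau> \<union> g \<gamma>)" using e by blast
    ultimately show "(\<Prod>v\<in>g \<gamma>. xmon v) * (\<Prod>v\<in>RR - (g \<tau> \<union> g \<gamma>). 1 - xmon v) =
                     (\<Prod>v\<in>g (M \<gamma> \<tau>) - g \<tau>. xmon v) * Qp (M \<gamma> \<tau>)" unfolding Qp_def by simp
  qed
  also have "\<dots> = (\<Sum>\<rho>\<in>{\<rho>\<in>\<Delta>. g \<tau> \<subseteq> g \<rho>}. (\<Prod>v\<in>g \<rho> - g \<tau>. xmon v) * Qp \<rho>)"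
    by (rule sum.reindex_bij_betw[OF lk_bij[OF t], where g="\<lambda>\<rho>. (\<Prod>v\<in>g \<rho> - g \<tau>. xmon v) * Qp \<rho>"])
  finally show ?thesis by simp
qed

definition Fp :: "(real ^ 'n) set \<Rightarrow> 'n lpoly" where
  "Fp \<tau> = B \<Delta> \<tau> * (\<Sum>\<rho>\<in>{\<rho>\<in>\<Delta>. g \<tau> \<subseteq> g \<rho>}. (\<Prod>v\<in>g \<rho> - g \<tau>. xmon v) * Qp \<rho>)"

lemma sum_Fp:
  "(\<Sum>\<tau>\<in>\<Delta>. Fp \<tau>) = H \<Delta> + (\<Sum>\<tau>\<in>sing \<Delta>. B \<Delta> \<tau> * H_lk \<Delta> \<tau> * (\<Prod>v\<in>RR - star_gens \<Delta> \<tau>. 1 - xmon v))"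
proof -
  have z: "{0} \<in> \<Delta>" by (rule zero_in(1))
  have F0: "Fp {0} = H \<Delta>"
  proof -
    have "B \<Delta> {0} = 1" unfolding B_def box_zero by (simp add: xmon0)
    moreover have "{\<rho>\<in>\<Delta>. g {0} \<subseteq> g \<rho>} = \<Delta>" using zero_in(2) by simp
    ultimately show ?thesis unfolding Fp_def H_def Qp_def using zero_in(2) by simp
  qed
  have Fs: "Fp \<tau> = B \<Delta> \<tau> * H_lk \<Delta> \<tau> * (\<Prod>v\<in>RR - star_gens \<Delta> \<tau>. 1 - xmon v)" if "\<tau> \<in> \<Delta>" for \<tau>
    unfolding Fp_def lk_sum[OF that] by (simp add: mult.assoc)
  have Fr: "Fp \<tau> = 0" if "\<tau> \<in> \<Delta> - {{0}} - sing \<Delta>" for \<tau>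
  proof -
    have "unimodular \<tau>" "\<tau> \<in> \<Delta>" "\<tau> \<noteq> {0}" using that unfolding sing_def by auto
    then have "box_pts \<Delta> \<tau> = {}" using box_unimod by blast
    then show ?thesis unfolding Fp_def B_def by simp
  qed
  have fD: "finite \<Delta>" by (rule finD)
  have sD: "sing \<Delta> \<subseteq> \<Delta> - {{0}}" unfolding sing_def using zero_not_sing sing_def by auto
  have "(\<Sum>\<tau>\<in>\<Delta>. Fp \<tau>) = Fp {0} + (\<Sum>\<tau>\<in>\<Delta> - {{0}}. Fp \<tau>)"
    using fD z by (simp add: sum.remove)
  also have "(\<Sum>\<tau>\<in>\<Delta> - {{0}}. Fp \<tau>) = (\<Sum>\<tau>\<in>(\<Delta> - {{0}}) - sing \<Delta>. Fp \<tau>) + (\<Sum>\<tau>\<in>sing \<Delta>. Fp \<tau>)"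
    using fD sD by (intro sum.subset_diff) auto
  also have "(\<Sum>\<tau>\<in>(\<Delta> - {{0}}) - sing \<Delta>. Fp \<tau>) = 0" using Fr by (intro sum.neutral) auto
  also have "(\<Sum>\<tau>\<in>sing \<Delta>. Fp \<tau>) = (\<Sum>\<tau>\<in>sing \<Delta>. B \<Delta> \<tau> * H_lk \<Delta> \<tau> * (\<Prod>v\<in>RR - star_gens \<Delta> \<tau>. 1 - xmon v))"
    using Fs sD by (intro sum.cong) auto
  finally show ?thesis using F0 by simp
qed

lemma term_eval:
  assumes t: "\<tau> \<in> \<Delta>" and r: "\<rho> \<in> \<Delta>"
  shows "mul_series (\<Prod>v\<in>RR. 1 - xmon v) (\<lambda>y. Sg (g \<rho>) (y - u - (\<Sum>v\<in>g \<rho> - g \<tau>. v))) w =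
         Poly_Mapping.lookup (xmon u * ((\<Prod>v\<in>g \<rho> - g \<tau>. xmon v) * Qp \<rho>)) w"
proof -
  let ?s = "(\<Sum>v\<in>g \<rho> - g \<tau>. v)"
  have fr: "finite (g \<rho>)" by (rule g_fin[OF r])
  have PP: "(\<Prod>v\<in>RR. 1 - xmon v) = Qp \<rho> * (\<Prod>v\<in>g \<rho>. 1 - xmon v)"
    unfolding Qp_def by (rule prod.subset_diff[OF g_R R_fin])
  have ms: "mul_series (\<Prod>v\<in>RR. 1 - xmon v) (Sg (g \<rho>)) = Poly_Mapping.lookup (Qp \<rho>)"
    unfolding PP ms_mult K_lemma[OF g_li[OF r]] ms_delta ..
  have "(\<lambda>y. Sg (g \<rho>) (y - u - ?s)) = (\<lambda>y. Sg (g \<rho>) (y - (u + ?s)))" by (simp add: diff_diff_eq)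
  then have "mul_series (\<Prod>v\<in>RR. 1 - xmon v) (\<lambda>y. Sg (g \<rho>) (y - u - ?s)) w =
             mul_series (\<Prod>v\<in>RR. 1 - xmon v) (Sg (g \<rho>)) (w - (u + ?s))"
    by (simp only: ms_shift)
  also have "\<dots> = Poly_Mapping.lookup (xmon (u + ?s) * Qp \<rho>) w"
    unfolding ms lookup_xmon_mult ..
  also have "xmon (u + ?s) = xmon u * (\<Prod>v\<in>g \<rho> - g \<tau>. xmon v)"
    using fr by (simp add: xmon_add xmon_sum)
  finally show ?thesis by (simp add: mult.assoc)
qed

lemma LHS_eval:
  "mul_series (\<Prod>v\<in>RR. 1 - xmon v) (G \<sigma>) w = Poly_Mapping.lookup (\<Sum>\<tau>\<in>\<Delta>. Fp \<tau>) w"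
proof -
  let ?P = "(\<Prod>v\<in>RR. 1 - xmon v)"
  have Geq: "G \<sigma> = (\<lambda>y. \<Sum>\<tau>\<in>\<Delta>. \<Sum>\<rho>\<in>{\<rho>\<in>\<Delta>. g \<tau> \<subseteq> g \<rho>}. \<Sum>u\<in>box_pts \<Delta> \<tau>. Sg (g \<rho>) (y - u - (\<Sum>v\<in>g \<rho> - g \<tau>. v)))"
    by (rule ext, rule DEC)
  have fD: "finite \<Delta>" by (rule finD)
  have "mul_series ?P (G \<sigma>) w = (\<Sum>\<tau>\<in>\<Delta>. mul_series ?P (\<lambda>y. \<Sum>\<rho>\<in>{\<rho>\<in>\<Delta>. g \<tau> \<subseteq> g \<rho>}. \<Sum>u\<in>box_pts \<Delta> \<tau>. Sg (g \<rho>) (y - u - (\<Sum>v\<in>g \<rho> - g \<tau>. v))) w)"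
    unfolding Geq by (rule ms_gsum[OF fD])
  also have "\<dots> = (\<Sum>\<tau>\<in>\<Delta>. Poly_Mapping.lookup (Fp \<tau>) w)"
  proof (rule sum.cong[OF refl])
    fix \<tau> assume t: "\<tau> \<in> \<Delta>"
    have f1: "finite {\<rho>\<in>\<Delta>. g \<tau> \<subseteq> g \<rho>}" using fD by simp
    have "mul_series ?P (\<lambda>y. \<Sum>\<rho>\<in>{\<rho>\<in>\<Delta>. g \<tau> \<subseteq> g \<rho>}. \<Sum>u\<in>box_pts \<Delta> \<tau>. Sg (g \<rho>) (y - u - (\<Sum>v\<in>g \<rho> - g \<tau>. v))) w
        = (\<Sum>\<rho>\<in>{\<rho>\<in>\<Delta>. g \<tau> \<subseteq> g \<rho>}. mul_series ?P (\<lambda>y. \<Sum>u\<in>box_pts \<Delta> \<tau>. Sg (g \<rho>) (y - u - (\<Sum>v\<in>g \<rho> - g \<tau>. v))) w)"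
      by (rule ms_gsum[OF f1])
    also have "\<dots> = (\<Sum>\<rho>\<in>{\<rho>\<in>\<Delta>. g \<tau> \<subseteq> g \<rho>}. Poly_Mapping.lookup (B \<Delta> \<tau> * ((\<Prod>v\<in>g \<rho> - g \<tau>. xmon v) * Qp \<rho>)) w)"
    proof (rule sum.cong[OF refl])
      fix \<rho> assume "\<rho> \<in> {\<rho>\<in>\<Delta>. g \<tau> \<subseteq> g \<rho>}"
      then have r: "\<rho> \<in> \<Delta>" by simp
      have "mul_series ?P (\<lambda>y. \<Sum>u\<in>box_pts \<Delta> \<tau>. Sg (g \<rho>) (y - u - (\<Sum>v\<in>g \<rho> - g \<tau>. v))) w
          = (\<Sum>u\<in>box_pts \<Delta> \<tau>. mul_series ?P (\<lambda>y. Sg (g \<rho>) (y - u - (\<Sum>v\<in>g \<rho> - g \<tau>. v))) w)"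
        by (rule ms_gsum[OF box_fin[OF t]])
      also have "\<dots> = (\<Sum>u\<in>box_pts \<Delta> \<tau>. Poly_Mapping.lookup (xmon u * ((\<Prod>v\<in>g \<rho> - g \<tau>. xmon v) * Qp \<rho>)) w)"
        by (rule sum.cong[OF refl]) (rule term_eval[OF t r])
      also have "\<dots> = Poly_Mapping.lookup (B \<Delta> \<tau> * ((\<Prod>v\<in>g \<rho> - g \<tau>. xmon v) * Qp \<rho>)) w"
        unfolding B_def by (simp add: lookup_sum sum_distrib_right)
      finally show "mul_series ?P (\<lambda>y. \<Sum>u\<in>box_pts \<Delta> \<tau>. Sg (g \<rho>) (y - u - (\<Sum>v\<in>g \<rho> - g \<tau>. v))) w
          = Poly_Mapping.lookup (B \<Delta> \<tau> * ((\<Prod>v\<in>g \<rho> - g \<tau>. xmon v) * Qp \<rho>)) w" .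
    qed
    also have "\<dots> = Poly_Mapping.lookup (Fp \<tau>) w"
      unfolding Fp_def by (simp add: lookup_sum sum_distrib_left)
    finally show "mul_series ?P (\<lambda>y. \<Sum>\<rho>\<in>{\<rho>\<in>\<Delta>. g \<tau> \<subseteq> g \<rho>}. \<Sum>u\<in>box_pts \<Delta> \<tau>. Sg (g \<rho>) (y - u - (\<Sum>v\<in>g \<rho> - g \<tau>. v))) w
        = Poly_Mapping.lookup (Fp \<tau>) w" .
  qed
  also have "\<dots> = Poly_Mapping.lookup (\<Sum>\<tau>\<in>\<Delta>. Fp \<tau>) w" by (simp add: lookup_sum)
  finally show ?thesis .
qed

lemma main:
  "mul_series (\<Prod>v\<in>ray_gens \<Delta>. 1 - xmon v) (G \<sigma>) =
   Poly_Mapping.lookup (H \<Delta> + (\<Sum>\<tau>\<in>sing \<Delta>. B \<Delta> \<tau> * H_lk \<Delta> \<tau> * (\<Prod>v\<in>ray_gens \<Delta> - star_gens \<Delta> \<tau>. 1 - xmon v)))"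
proof
  fix w show "mul_series (\<Prod>v\<in>ray_gens \<Delta>. 1 - xmon v) (G \<sigma>) w =
   Poly_Mapping.lookup (H \<Delta> + (\<Sum>\<tau>\<in>sing \<Delta>. B \<Delta> \<tau> * H_lk \<Delta> \<tau> * (\<Prod>v\<in>ray_gens \<Delta> - star_gens \<Delta> \<tau>. 1 - xmon v))) w"
    using LHS_eval[of w] sum_Fp by simp
qed

end

theorem theorem1p1:
  fixes \<sigma> :: "(real ^ 'n) set" and \<Delta> :: "(real ^ 'n) set set"
  assumes "rational_polyhedral_cone \<sigma>"
    and "strongly_convex \<sigma>"
    and "rational_simplicial_subdivision \<Delta> \<sigma>"
  shows "mul_series (\<Prod>v\<in>ray_gens \<Delta>. 1 - xmon v) (G \<sigma>) =
         Poly_Mapping.lookup (H \<Delta> + (\<Sum>\<tau>\<in>sing \<Delta>. B \<Delta> \<tau> * H_lk \<Delta> \<tau> *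
                          (\<Prod>v\<in>ray_gens \<Delta> - star_gens \<Delta> \<tau>. 1 - xmon v)))"
proof -
  obtain S where S: "\<sigma> = cone_gen S" using assms(1) unfolding rational_polyhedral_cone_def by blast
  have "0 \<in> \<sigma>" unfolding S cone_gen_def by (intro CollectI exI[of _ "\<lambda>_. 0"]) simp
  moreover have "\<Union>\<Delta> = \<sigma>" using assms(3) rational_simplicial_subdivision_def by blast
  ultimately have ne: "\<Delta> \<noteq> {}" by auto
  interpret sfan \<Delta> \<sigma> using assms(3) ne by unfold_locales
  show ?thesis by (rule main)
qed

end
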